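(* In the quantum switch model of the context (with $W=\infty$), suppose $(\lambda_{ij}+\epsilon)_{i,j\in\mathcal K}\in\Lambda$ for some $\epsilon>0$ and that Assumption 1 holds. Then the quantum switch is stable under any on-demand protocol $\pi_{\mathrm{od}}$.
   Context: Quantum switch model. There are $K$ end nodes $\mathcal K=\{1,\dots,K\}$ and a switch (node $0$); time is slotted, $t=0,1,2,\dots$; pair-indexed quantities are symmetric in $(i,j)$. In slot $t$: (i) $C_{0i}(t)\in\{0,1\}$ EPR pairs are generated between the switch and node $i$, where $\{C_{0i}(t)\}_{t\ge0}$ are mutually independent Bernoulli processes (i.i.d. in $t$) with mean $p_i$. (ii) The switch chooses nonnegative integers $F_{ij}(t)=F_{ji}(t)$ (entanglement swaps for pair $(i,j)$, each consuming one stored switch–$i$ and one stored switch–$j$ pair) with $\sum_iF_{ij}(t)\le E_{0j}(t)$; no limit on swaps per slot ($W=\infty$); each swap succeeds independently with probability $q\in(0,1]$; $R_{ij}(t)$ is the number of successes. (iii) $A_{ij}(t)\in\mathbb N$ new requests for pair $(i,j)$ arrive. Dynamics: $U_{ij}(t+1)=[U_{ij}(t)-E_{ij}(t)-R_{ij}(t)]^++A_{ij}(t)$, $E_{ij}(t+1)=[E_{ij}(t)+R_{ij}(t)-U_{ij}(t)]^+$, $E_{0i}(t+1)=E_{0i}(t)-\sum_jF_{ij}(t)+C_{0i}(t)$, with zero initial values; $U_{ij}$ = pending requests, $E_{ij}$ = stored $i$–$j$ pairs, $E_{0i}$ = stored switch–$i$ pairs; memory unlimited, no decoherence. Requests: $\{A_{ij}(t)\}_t$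 mutually independent across pairs, each stationary ergodic with rate $\lambda_{ij}$, and $\mathbb E[A_{ij}(t)^2\mid H(t)=h]\le A_{\max}^2$ for every $t,i,j$ and realization $h$ of the history $H(t)=(E_{ij}(\tau),U_{ij}(\tau),A_{ij}(\tau),R_{ij}(\tau),C_{0i}(\tau))_{\tau=0}^{t-1}$. Stability: for all $i,j$, $\limsup_{t\to\infty}\frac1t\sum_{\tau=0}^{t-1}\mathbb P[U_{ij}(\tau)>V]\to0$ as $V\to\infty$. $\Lambda$ is the set of nonnegative matrices $(\lambda_{ij})$ for which there exist nonnegative $f_{ij}=f_{ji}$ with $\sum_if_{ij}\le p_j$ for all $j$ and $\lambda_{ij}\le qf_{ij}$ for all $i,j$. Assumption 1: for every $\epsilon'>0$ there is a constant $c_1(\epsilon')$, independent of $t$, such that for all $t\ge1$ and all $i,j$, $\mathbb E\big[\sum_{\tau=0}^{t-1}A_{ij}(\tau)\,\big|\,B_1\big]\mathbb P[B_1]\le c_1(\epsilon')$, where $B_1$ is the event that $\big|\frac1t\sum_{\tau=0}^{t-1}A_{i'j'}(\tau)-\lambda_{i'j'}\big|>\epsilon'$ for some $i',j'\in\mathcal K$. On-demand protocols: a protocol is on-demand if in every slot $t$ its choices $F_{ij}=F_{ij}(t)$ satisfy $\sum_{i\in\mathcal K}F_{ij}\le E_{0j}(t)$ for all $j$; $F_{ij}\le U_{ij}(t)$ for all $i,j$; $F_{ij}=F_{ji}\in\mathbb N$; and $\big(E_{0i}(t)-\sum_kF_{ik}\big)\big(E_{0j}(t)-\sum_kF_{kj}\big)\big(U_{ij}(t)-F_{ij}\big)=0$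 for all $i,j$. *)

theory Defs
  imports "HOL-Probability.Probability"
begin

definition seqM :: "(nat \<Rightarrow> nat) measure" where
  "seqM = PiM UNIV (\<lambda>_. count_space UNIV)"

definition seq_shift :: "(nat \<Rightarrow> nat) \<Rightarrow> (nat \<Rightarrow> nat)" where
  "seq_shift x = (\<lambda>n. x (Suc n))"

definition pairs :: "nat \<Rightarrow> (nat \<times> nat) set" where
  "pairs K = {(i, j). i \<in> {1..K} \<and> j \<in> {1..K} \<and> i \<noteq> j}"

definition in_Lambda :: "nat \<Rightarrow> (nat \<Rightarrow> real) \<Rightarrow> real \<Rightarrow> (nat \<Rightarrow> nat \<Rightarrow> real) \<Rightarrow> bool" where
  "in_Lambda K p q mu \<longleftrightarrow>
     (\<forall>(i, j) \<in> pairs K. mu i j \<ge> 0) \<and>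
     (\<exists>f :: nat \<Rightarrow> nat \<Rightarrow> real.
        (\<forall>(i, j) \<in> pairs K. f i j \<ge> 0 \<and> f i j = f j i) \<and>
        (\<forall>j \<in> {1..K}. (\<Sum>i \<in> {1..K} - {j}. f i j) \<le> p j) \<and>
        (\<forall>(i, j) \<in> pairs K. mu i j \<le> q * f i j))"

definition stationary_ergodic_rate :: "'a measure \<Rightarrow> (nat \<Rightarrow> 'a \<Rightarrow> nat) \<Rightarrow> real \<Rightarrow> bool" where
  "stationary_ergodic_rate M X lam \<longleftrightarrow>
     (\<lambda>\<omega> t. X t \<omega>) \<in> measurable M seqM \<and>
     (let D = distr M seqM (\<lambda>\<omega> t. X t \<omega>) in
        distr D seqM seq_shift = D \<and>
        (\<forall>B \<in> sets seqM. seq_shift -` B \<inter> space seqM = B \<longrightarrow> emeasure D B = 0 \<or> emeasure D B = 1)) \<and>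
     integrable M (\<lambda>\<omega>. real (X 0 \<omega>)) \<and>
     (\<integral>\<omega>. real (X 0 \<omega>) \<partial>M) = lam"

definition gen_sigma :: "'a measure \<Rightarrow> ('a \<Rightarrow> nat) set \<Rightarrow> 'a measure" where
  "gen_sigma M Xs = sigma (space M) (\<Union>X \<in> Xs. {X -` B \<inter> space M | B. True})"

definition history :: "'a measure \<Rightarrow> nat \<Rightarrow> (nat \<Rightarrow> nat \<Rightarrow> nat \<Rightarrow> 'a \<Rightarrow> nat)
    \<Rightarrow> (nat \<Rightarrow> nat \<Rightarrow> nat \<Rightarrow> 'a \<Rightarrow> nat) \<Rightarrow> (nat \<Rightarrow> nat \<Rightarrow> nat \<Rightarrow> 'a \<Rightarrow> nat)
    \<Rightarrow> (nat \<Rightarrow> nat \<Rightarrow> nat \<Rightarrow> 'a \<Rightarrow> nat) \<Rightarrow> (nat \<Rightarrow> nat \<Rightarrow> 'a \<Rightarrow> nat) \<Rightarrow> nat \<Rightarrow> 'a measure" where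
  "history M K E U A R C t = gen_sigma M
     ((\<Union>(i, j) \<in> pairs K. \<Union>\<tau> \<in> {..<t}. {E i j \<tau>, U i j \<tau>, A i j \<tau>, R i j \<tau>}) \<union>
      (\<Union>i \<in> {1..K}. \<Union>\<tau> \<in> {..<t}. {C i \<tau>}))"

text \<open>All exogenous randomness up to (excluding) slot t: arrivals, EPR generations and swap coins.
  Protocol decisions in slot t are required to be measurable w.r.t. this sigma-algebra.\<close>
definition past :: "'a measure \<Rightarrow> nat \<Rightarrow> (nat \<Rightarrow> nat \<Rightarrow> nat \<Rightarrow> 'a \<Rightarrow> nat)
    \<Rightarrow> (nat \<Rightarrow> nat \<Rightarrow> 'a \<Rightarrow> nat) \<Rightarrow> (nat \<Rightarrow> nat \<Rightarrow> nat \<Rightarrow> nat \<Rightarrow> 'a \<Rightarrow> nat) \<Rightarrow> nat \<Rightarrow> 'a measure" where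
  "past M K A C S t = gen_sigma M
     ((\<Union>(i, j) \<in> pairs K. \<Union>\<tau> \<in> {..<t}. {A i j \<tau>} \<union> (\<Union>k. {S i j \<tau> k})) \<union>
      (\<Union>i \<in> {1..K}. \<Union>\<tau> \<in> {..<t}. {C i \<tau>}))"

text \<open>Sources of exogenous randomness, all viewed as random sequences:
  EPR generation C_0i(t), the whole arrival process of an unordered pair, and the
  k-th swap coin of an unordered pair in slot t.\<close>
datatype src = SrcC nat nat | SrcA nat nat | SrcS nat nat nat nat

fun sources :: "(nat \<Rightarrow> nat \<Rightarrow> 'a \<Rightarrow> nat) \<Rightarrow> (nat \<Rightarrow> nat \<Rightarrow> nat \<Rightarrow> 'a \<Rightarrow> nat)
    \<Rightarrow> (nat \<Rightarrow> nat \<Rightarrow> nat \<Rightarrow> nat \<Rightarrow> 'a \<Rightarrow> nat) \<Rightarrow> src \<Rightarrow> 'a \<Rightarrow> nat \<Rightarrow> nat" where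
  "sources C A S (SrcC i t) = (\<lambda>\<omega> _. C i t \<omega>)"
| "sources C A S (SrcA i j) = (\<lambda>\<omega> t. A i j t \<omega>)"
| "sources C A S (SrcS i j t k) = (\<lambda>\<omega> _. S i j t k \<omega>)"

definition src_index :: "nat \<Rightarrow> src set" where
  "src_index K = {SrcC i t | i t. i \<in> {1..K}}
     \<union> {SrcA i j | i j. 1 \<le> i \<and> i < j \<and> j \<le> K}
     \<union> {SrcS i j t k | i j t k. 1 \<le> i \<and> i < j \<and> j \<le> K}"

definition stable :: "'a measure \<Rightarrow> nat \<Rightarrow> (nat \<Rightarrow> nat \<Rightarrow> nat \<Rightarrow> 'a \<Rightarrow> nat) \<Rightarrow> bool" where
  "stable M K U \<longleftrightarrow> (\<forall>(i, j) \<in> pairs K.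
     ((\<lambda>V::real. limsup (\<lambda>t. ereal (1 / real t *
         (\<Sum>\<tau> < t. measure M {\<omega> \<in> space M. real (U i j \<tau> \<omega>) > V})))) \<longlongrightarrow> 0) at_top)"

end

theory Submission
  imports Defs
begin

locale qsw =
  fixes M :: "'a measure" and K :: nat
    and p :: "nat \<Rightarrow> real" and q :: "real" and lam :: "nat \<Rightarrow> nat \<Rightarrow> real"
    and eps :: real and Amax :: real
    and C :: "nat \<Rightarrow> nat \<Rightarrow> 'a \<Rightarrow> nat"
    and A :: "nat \<Rightarrow> nat \<Rightarrow> nat \<Rightarrow> 'a \<Rightarrow> nat"
    and S :: "nat \<Rightarrow> nat \<Rightarrow> nat \<Rightarrow> nat \<Rightarrow> 'a \<Rightarrow> nat"
    and F U E R :: "nat \<Rightarrow> nat \<Rightarrow> nat \<Rightarrow> 'a \<Rightarrow> nat"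
    and E0 :: "nat \<Rightarrow> nat \<Rightarrow> 'a \<Rightarrow> nat"
  assumes M: "prob_space M"
    and q: "0 < q" "q \<le> 1"
    and indep: "prob_space.indep_vars M (\<lambda>_. seqM) (sources C A S) (src_index K)"
    and C_bern: "\<And>i t. i \<in> {1..K} \<Longrightarrow> (\<forall>\<omega>\<in>space M. C i t \<omega> \<le> 1)
                   \<and> measure M {\<omega> \<in> space M. C i t \<omega> = 1} = p i"
    and S_sym: "\<And>i j t k. S i j t k = S j i t k"
    and S_bern: "\<And>i j t k. (i, j) \<in> pairs K \<Longrightarrow> (\<forall>\<omega>\<in>space M. S i j t k \<omega> \<le> 1)
                   \<and> measure M {\<omega> \<in> space M. S i j t k \<omega> = 1} = q"
    and A_sym: "\<And>i j t. A i j t = A j i t"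
    and A_erg: "\<And>i j. (i, j) \<in> pairs K \<Longrightarrow> stationary_ergodic_rate M (A i j) (lam i j)"
    and eps: "eps > 0"
    and Lam: "in_Lambda K p q (\<lambda>i j. lam i j + eps)"
    and assm1: "\<And>eps'. eps' > 0 \<Longrightarrow> \<exists>c1::real. \<forall>t \<ge> 1. \<forall>(i, j) \<in> pairs K.
        (\<integral>\<^sup>+ \<omega>. indicator {\<omega> \<in> space M. \<exists>(i', j') \<in> pairs K.
                 \<bar>(\<Sum>\<tau> < t. real (A i' j' \<tau> \<omega>)) / real t - lam i' j'\<bar> > eps'} \<omega>
              * ennreal (\<Sum>\<tau> < t. real (A i j \<tau> \<omega>)) \<partial>M) \<le> ennreal c1"
    and init: "\<And>i j \<omega>. U i j 0 \<omega> = 0 \<and> E i j 0 \<omega> = 0 \<and> E0 i 0 \<omega> = 0"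
    and R_def: "\<And>i j t \<omega>. (i, j) \<in> pairs K \<Longrightarrow> R i j t \<omega> = (\<Sum>k < F i j t \<omega>. S i j t k \<omega>)"
    and U_step: "\<And>i j t \<omega>. (i, j) \<in> pairs K \<Longrightarrow>
        U i j (Suc t) \<omega> = (U i j t \<omega> - E i j t \<omega> - R i j t \<omega>) + A i j t \<omega>"
    and E_step: "\<And>i j t \<omega>. (i, j) \<in> pairs K \<Longrightarrow>
        E i j (Suc t) \<omega> = (E i j t \<omega> + R i j t \<omega>) - U i j t \<omega>"
    and E0_step: "\<And>i t \<omega>. i \<in> {1..K} \<Longrightarrow>
        E0 i (Suc t) \<omega> = E0 i t \<omega> - (\<Sum>j \<in> {1..K} - {i}. F i j t \<omega>) + C i t \<omega>"
    and F_meas: "\<And>i j t. (i, j) \<in> pairs K \<Longrightarrow>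
        F i j t \<in> measurable (past M K A C S t) (count_space UNIV)"
    and F_sym: "\<And>i j t \<omega>. F i j t \<omega> = F j i t \<omega>"
    and od_cap: "\<And>j t \<omega>. j \<in> {1..K} \<Longrightarrow> (\<Sum>i \<in> {1..K} - {j}. F i j t \<omega>) \<le> E0 j t \<omega>"
    and od_dem: "\<And>i j t \<omega>. (i, j) \<in> pairs K \<Longrightarrow> F i j t \<omega> \<le> U i j t \<omega>"
    and od_max: "\<And>i j t \<omega>. (i, j) \<in> pairs K \<Longrightarrow>
        (E0 i t \<omega> - (\<Sum>k \<in> {1..K} - {i}. F i k t \<omega>)) * (E0 j t \<omega> - (\<Sum>k \<in> {1..K} - {j}. F k j t \<omega>))
          * (U i j t \<omega> - F i j t \<omega>) = 0"
begin

interpretation P: prob_space M by (rule M)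

lemma pairs_iff: "(i, j) \<in> pairs K \<longleftrightarrow> i \<in> {1..K} \<and> j \<in> {1..K} \<and> i \<noteq> j"
  by (simp add: pairs_def)

lemma pairs_sym: "(i, j) \<in> pairs K \<Longrightarrow> (j, i) \<in> pairs K"
  by (auto simp: pairs_def)

lemma finite_pairs: "finite (pairs K)"
proof -
  have "pairs K \<subseteq> {1..K} \<times> {1..K}" by (auto simp: pairs_def)
  then show ?thesis by (rule finite_subset) auto
qed

section \<open>Pathwise facts\<close>

lemma R_sym: "(i, j) \<in> pairs K \<Longrightarrow> R i j t \<omega> = R j i t \<omega>"
  using R_def[of i j] R_def[of j i] pairs_sym[of i j] F_sym S_sym by simp

lemma R_le_F: "(i, j) \<in> pairs K \<Longrightarrow> \<omega> \<in> space M \<Longrightarrow> R i j t \<omega> \<le> F i j t \<omega>"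
proof -
  assume ij: "(i, j) \<in> pairs K" and w: "\<omega> \<in> space M"
  have "R i j t \<omega> = (\<Sum>k < F i j t \<omega>. S i j t k \<omega>)" using R_def[OF ij] .
  also have "\<dots> \<le> (\<Sum>k < F i j t \<omega>. 1)" using S_bern[OF ij] w by (intro sum_mono) auto
  finally show ?thesis by simp
qed

lemma E_zero_U_step:
  assumes ij: "(i, j) \<in> pairs K" and w: "\<omega> \<in> space M"
  shows "E i j t \<omega> = 0"
proof (induction t)
  case 0 then show ?case using init by simp
next
  case (Suc t)
  have "R i j t \<omega> \<le> U i j t \<omega>" using R_le_F[OF ij w] od_dem[OF ij] le_trans by blast
  then show ?case using E_step[OF ij] Suc by simp
qed

lemma U_Suc: "(i, j) \<in> pairs K \<Longrightarrow> \<omega> \<in> space M \<Longrightarrow>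
   U i j (Suc t) \<omega> + R i j t \<omega> = U i j t \<omega> + A i j t \<omega> \<and> R i j t \<omega> \<le> U i j t \<omega>"
proof -
  assume ij: "(i, j) \<in> pairs K" and w: "\<omega> \<in> space M"
  have "R i j t \<omega> \<le> U i j t \<omega>" using R_le_F[OF ij w] od_dem[OF ij] le_trans by blast
  then show ?thesis using U_step[OF ij, of t \<omega>] E_zero_U_step[OF ij w] by simp
qed

lemma UE_sym: "(i, j) \<in> pairs K \<Longrightarrow> U i j t \<omega> = U j i t \<omega> \<and> E i j t \<omega> = E j i t \<omega>"
proof (induction t)
  case 0 then show ?case using init by simp
next
  case (Suc t)
  have ji: "(j, i) \<in> pairs K" using pairs_sym[OF Suc.prems] .
  show ?case using Suc U_step[OF Suc.prems] U_step[OF ji] E_step[OF Suc.prems] E_step[OF ji]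
      R_sym[OF Suc.prems] A_sym by simp
qed

lemma U_sym: "(i, j) \<in> pairs K \<Longrightarrow> U i j t \<omega> = U j i t \<omega>"
  using UE_sym by blast


definition Gc :: "nat \<Rightarrow> nat \<Rightarrow> 'a \<Rightarrow> nat" where
  "Gc i t \<omega> = (\<Sum>\<tau><t. C i \<tau> \<omega>)"
definition Dc :: "nat \<Rightarrow> nat \<Rightarrow> 'a \<Rightarrow> nat" where
  "Dc i t \<omega> = (\<Sum>\<tau><t. \<Sum>k\<in>{1..K} - {i}. F i k \<tau> \<omega>)"
definition Nc :: "nat \<Rightarrow> nat \<Rightarrow> nat \<Rightarrow> 'a \<Rightarrow> nat" where
  "Nc a b t \<omega> = (\<Sum>\<tau><t. F a b \<tau> \<omega>)"
definition Sc :: "nat \<Rightarrow> nat \<Rightarrow> nat \<Rightarrow> 'a \<Rightarrow> nat" where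
  "Sc a b t \<omega> = (\<Sum>\<tau><t. R a b \<tau> \<omega>)"
definition Arr :: "nat \<Rightarrow> nat \<Rightarrow> nat \<Rightarrow> 'a \<Rightarrow> real" where
  "Arr a b t \<omega> = (\<Sum>\<tau><t. real (A a b \<tau> \<omega>))"
definition Xd :: "nat \<Rightarrow> nat \<Rightarrow> nat \<Rightarrow> 'a \<Rightarrow> real" where
  "Xd a b t \<omega> = q * real (Nc a b t \<omega>) - real (Sc a b t \<omega>)"

lemma row_col: "(\<Sum>k\<in>{1..K} - {i}. F i k t \<omega>) = (\<Sum>k\<in>{1..K} - {i}. F k i t \<omega>)"
  using F_sym by simp

lemma row_le_E0: "i \<in> {1..K} \<Longrightarrow> (\<Sum>k\<in>{1..K} - {i}. F i k t \<omega>) \<le> E0 i t \<omega>"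
  using od_cap[of i t \<omega>] row_col by simp

lemma E0_acc: "i \<in> {1..K} \<Longrightarrow> E0 i t \<omega> + Dc i t \<omega> = Gc i t \<omega>"
proof (induction t)
  case 0 then show ?case using init by (simp add: Dc_def Gc_def)
next
  case (Suc t)
  have "E0 i (Suc t) \<omega> = E0 i t \<omega> - (\<Sum>j \<in> {1..K} - {i}. F i j t \<omega>) + C i t \<omega>"
    using E0_step[OF Suc.prems] .
  then show ?case using Suc row_le_E0[OF Suc.prems, of t \<omega>] by (simp add: Dc_def Gc_def)
qed

lemma Gc_le: "i \<in> {1..K} \<Longrightarrow> \<omega> \<in> space M \<Longrightarrow> Gc i t \<omega> \<le> t"
proof -
  assume i: "i \<in> {1..K}" and w: "\<omega> \<in> space M"
  have "Gc i t \<omega> \<le> (\<Sum>\<tau><t. 1)" unfolding Gc_def using C_bern[OF i] w by (intro sum_mono) auto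
  then show ?thesis by simp
qed

lemma Dc_le: "i \<in> {1..K} \<Longrightarrow> \<omega> \<in> space M \<Longrightarrow> Dc i t \<omega> \<le> t"
  using E0_acc[of i t \<omega>] Gc_le[of i \<omega> t] by simp

lemma F_le: assumes ij: "(i, j) \<in> pairs K" and w: "\<omega> \<in> space M" shows "F i j t \<omega> \<le> t"
proof -
  have i: "i \<in> {1..K}" and j: "j \<in> {1..K} - {i}" using ij by (auto simp: pairs_def)
  have "F i j t \<omega> \<le> (\<Sum>k\<in>{1..K} - {i}. F i k t \<omega>)"
    by (rule member_le_sum) (use j in auto)
  also have "\<dots> \<le> E0 i t \<omega>" using row_le_E0[OF i] .
  also have "\<dots> \<le> Gc i t \<omega>" using E0_acc[OF i, of t \<omega>] by simp
  also have "\<dots> \<le> t" using Gc_le[OF i w] .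
  finally show ?thesis .
qed

lemma Nc_le_Dc: assumes ij: "(i, j) \<in> pairs K" shows "Nc i j t \<omega> \<le> Dc i t \<omega>"
proof -
  have j: "j \<in> {1..K} - {i}" using ij by (auto simp: pairs_def)
  show ?thesis unfolding Nc_def Dc_def
    by (intro sum_mono member_le_sum) (use j in auto)
qed

lemma Nc_le: "(i, j) \<in> pairs K \<Longrightarrow> \<omega> \<in> space M \<Longrightarrow> Nc i j t \<omega> \<le> t"
  using Nc_le_Dc[of i j t \<omega>] Dc_le[of i \<omega> t] by (auto simp: pairs_def)

lemma Dc_Nc: "Dc i t \<omega> = (\<Sum>k\<in>{1..K} - {i}. Nc i k t \<omega>)"
  unfolding Dc_def Nc_def by (rule sum.swap)

lemma U_acc: assumes ij: "(i, j) \<in> pairs K" and w: "\<omega> \<in> space M"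
  shows "U i j t \<omega> + Sc i j t \<omega> = (\<Sum>\<tau><t. A i j \<tau> \<omega>)"
proof (induction t)
  case 0 then show ?case using init by (simp add: Sc_def)
next
  case (Suc t)
  then show ?case using U_Suc[OF ij w, of t] by (simp add: Sc_def)
qed

lemma U_real: assumes ij: "(i, j) \<in> pairs K" and w: "\<omega> \<in> space M"
  shows "real (U i j t \<omega>) = Arr i j t \<omega> - q * real (Nc i j t \<omega>) + Xd i j t \<omega>"
proof -
  have "real (U i j t \<omega>) + real (Sc i j t \<omega>) = Arr i j t \<omega>"
    using arg_cong[OF U_acc[OF ij w, of t], of real] unfolding Arr_def by simp
  then show ?thesis unfolding Xd_def by simp
qed

lemma exhaust:
  assumes ij: "(i, j) \<in> pairs K" and w: "\<omega> \<in> space M" and lt: "F i j s \<omega> < U i j s \<omega>"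
  shows "Dc i (Suc s) \<omega> = Gc i s \<omega> \<or> Dc j (Suc s) \<omega> = Gc j s \<omega>"
proof -
  have i: "i \<in> {1..K}" and j: "j \<in> {1..K}" using ij by (auto simp: pairs_def)
  have "(E0 i s \<omega> - (\<Sum>k \<in> {1..K} - {i}. F i k s \<omega>)) * (E0 j s \<omega> - (\<Sum>k \<in> {1..K} - {j}. F j k s \<omega>)) = 0"
    using od_max[OF ij, of s \<omega>] lt row_col[of j s \<omega>] by simp
  then have "E0 i s \<omega> - (\<Sum>k \<in> {1..K} - {i}. F i k s \<omega>) = 0 \<or> E0 j s \<omega> - (\<Sum>k \<in> {1..K} - {j}. F j k s \<omega>) = 0"
    by simp
  moreover have "E0 l s \<omega> - (\<Sum>k \<in> {1..K} - {l}. F l k s \<omega>) = 0 \<Longrightarrow> l \<in> {1..K} \<Longrightarrow> Dc l (Suc s) \<omega> = Gc l s \<omega>" for l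
  proof -
    assume z: "E0 l s \<omega> - (\<Sum>k \<in> {1..K} - {l}. F l k s \<omega>) = 0" and l: "l \<in> {1..K}"
    have "E0 l (Suc s) \<omega> = C l s \<omega>" using E0_step[OF l, of s \<omega>] z by simp
    then show ?thesis using E0_acc[OF l, of "Suc s" \<omega>] by (simp add: Gc_def)
  qed
  ultimately show ?thesis using i j by blast
qed

lemma node_bound:
  assumes ij: "(i, j) \<in> pairs K" and w: "\<omega> \<in> space M" and ex: "Dc i (Suc s) \<omega> = Gc i s \<omega>"
  shows "real (U i j (Suc s) \<omega>) \<le> (\<Sum>k\<in>{1..K} - {i}. Arr i k (Suc s) \<omega>) - q * real (Gc i s \<omega>)
            + (\<Sum>k\<in>{1..K} - {i}. Xd i k (Suc s) \<omega>)"
proof -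
  have j: "j \<in> {1..K} - {i}" using ij by (auto simp: pairs_def)
  have pk: "k \<in> {1..K} - {i} \<Longrightarrow> (i, k) \<in> pairs K" for k using ij by (auto simp: pairs_def)
  have "real (U i j (Suc s) \<omega>) \<le> (\<Sum>k\<in>{1..K} - {i}. real (U i k (Suc s) \<omega>))"
    by (rule member_le_sum) (use j in auto)
  also have "\<dots> = (\<Sum>k\<in>{1..K} - {i}. Arr i k (Suc s) \<omega> - q * real (Nc i k (Suc s) \<omega>) + Xd i k (Suc s) \<omega>)"
    by (intro sum.cong refl U_real pk w)
  also have "\<dots> = (\<Sum>k\<in>{1..K} - {i}. Arr i k (Suc s) \<omega>) - q * real (\<Sum>k\<in>{1..K} - {i}. Nc i k (Suc s) \<omega>)
            + (\<Sum>k\<in>{1..K} - {i}. Xd i k (Suc s) \<omega>)"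
    by (simp add: sum.distrib sum_subtractf sum_distrib_left)
  also have "(\<Sum>k\<in>{1..K} - {i}. Nc i k (Suc s) \<omega>) = Gc i s \<omega>" using ex Dc_Nc by simp
  finally show ?thesis .
qed


lemma lam_nonneg: "(a, b) \<in> pairs K \<Longrightarrow> lam a b \<ge> 0"
  using A_erg[of a b] unfolding stationary_ergodic_rate_def Let_def
  by (metis integral_nonneg_AE AE_I2 of_nat_0_le_iff)

lemma lam_sum: assumes i: "i \<in> {1..K}"
  shows "(\<Sum>k\<in>{1..K} - {i}. lam i k + eps) \<le> q * p i"
proof -
  obtain f :: "nat \<Rightarrow> nat \<Rightarrow> real" where
    f1: "\<forall>(i, j) \<in> pairs K. f i j \<ge> 0 \<and> f i j = f j i" and
    f2: "\<forall>j \<in> {1..K}. (\<Sum>i \<in> {1..K} - {j}. f i j) \<le> p j" and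
    f3: "\<forall>(i, j) \<in> pairs K. lam i j + eps \<le> q * f i j"
    using Lam unfolding in_Lambda_def by blast
  have pk: "k \<in> {1..K} - {i} \<Longrightarrow> (i, k) \<in> pairs K" for k using i by (auto simp: pairs_def)
  have "(\<Sum>k\<in>{1..K} - {i}. lam i k + eps) \<le> (\<Sum>k\<in>{1..K} - {i}. q * f k i)"
  proof (intro sum_mono)
    fix k assume k: "k \<in> {1..K} - {i}"
    have "lam i k + eps \<le> q * f i k" "f i k = f k i" using f1 f3 pk[OF k] by auto
    then show "lam i k + eps \<le> q * f k i" by simp
  qed
  also have "\<dots> = q * (\<Sum>k\<in>{1..K} - {i}. f k i)" by (simp add: sum_distrib_left)
  also have "\<dots> \<le> q * p i" using f2 i q by (intro mult_left_mono) auto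
  finally show ?thesis .
qed

definition dl :: real where "dl = eps / 3"

lemma dl_pos: "dl > 0" using eps by (simp add: dl_def)

definition Zp :: "nat \<Rightarrow> nat \<Rightarrow> nat \<Rightarrow> 'a \<Rightarrow> real" where
  "Zp a b t \<omega> = max 0 (Arr a b t \<omega> - (lam a b + dl) * real t)"
definition Yd :: "nat \<Rightarrow> nat \<Rightarrow> 'a \<Rightarrow> real" where
  "Yd i t \<omega> = p i * real t - real (Gc i t \<omega>)"
definition Psi :: "nat \<Rightarrow> nat \<Rightarrow> 'a \<Rightarrow> real" where
  "Psi i s \<omega> = q * p i + (\<Sum>k\<in>{1..K} - {i}. Zp i k (Suc s) \<omega> + max 0 (Xd i k (Suc s) \<omega> - dl * real (Suc s)))
     + max 0 (q * Yd i s \<omega> - dl * real s)"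

lemma p_nonneg: "i \<in> {1..K} \<Longrightarrow> p i \<ge> 0"
  using C_bern[of i 0] by (metis measure_nonneg)

lemma Psi_nonneg: "i \<in> {1..K} \<Longrightarrow> Psi i s \<omega> \<ge> 0"
  unfolding Psi_def Zp_def using q p_nonneg[of i]
  by (intro add_nonneg_nonneg sum_nonneg) auto

lemma psi_bound:
  assumes ij: "(i, j) \<in> pairs K" and w: "\<omega> \<in> space M" and ex: "Dc i (Suc s) \<omega> = Gc i s \<omega>"
  shows "real (U i j (Suc s) \<omega>) \<le> Psi i s \<omega>"
proof -
  let ?I = "{1..K} - {i}"
  have i: "i \<in> {1..K}" and j: "j \<in> ?I" using ij by (auto simp: pairs_def)
  have cI: "card ?I \<ge> 1" using j by (metis One_nat_def Suc_leI card_gt_0_iff empty_iff finite_Diff finite_atLeastAtMost)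
  define t where "t = real (Suc s)"
  have t: "t = real s + 1" by (simp add: t_def)
  have h1: "Arr i k (Suc s) \<omega> \<le> (lam i k + dl) * t + Zp i k (Suc s) \<omega>" for k
    unfolding Zp_def t_def by linarith
  have h2: "Xd i k (Suc s) \<omega> \<le> dl * t + max 0 (Xd i k (Suc s) \<omega> - dl * real (Suc s))" for k
    unfolding t_def by linarith
  have h3: "- q * real (Gc i s \<omega>) \<le> - q * p i * real s + dl * real s + max 0 (q * Yd i s \<omega> - dl * real s)"
    unfolding Yd_def by (simp add: algebra_simps)
  have "real (U i j (Suc s) \<omega>) \<le> (\<Sum>k\<in>?I. Arr i k (Suc s) \<omega>) - q * real (Gc i s \<omega>)
            + (\<Sum>k\<in>?I. Xd i k (Suc s) \<omega>)" by (rule node_bound[OF ij w ex])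
  also have "\<dots> \<le> (\<Sum>k\<in>?I. (lam i k + dl) * t + Zp i k (Suc s) \<omega>) 
       + (- q * p i * real s + dl * real s + max 0 (q * Yd i s \<omega> - dl * real s))
       + (\<Sum>k\<in>?I. dl * t + max 0 (Xd i k (Suc s) \<omega> - dl * real (Suc s)))"
  proof -
    have "(\<Sum>k\<in>?I. Arr i k (Suc s) \<omega>) \<le> (\<Sum>k\<in>?I. (lam i k + dl) * t + Zp i k (Suc s) \<omega>)"
      by (intro sum_mono h1)
    moreover have "(\<Sum>k\<in>?I. Xd i k (Suc s) \<omega>) \<le> (\<Sum>k\<in>?I. dl * t + max 0 (Xd i k (Suc s) \<omega> - dl * real (Suc s)))"
      by (intro sum_mono h2)
    ultimately show ?thesis using h3 by linarith
  qed
  also have "\<dots> = t * (\<Sum>k\<in>?I. lam i k + eps) - t * real (card ?I) * dl - q * p i * real s + dl * real s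
       + ((\<Sum>k\<in>?I. Zp i k (Suc s) \<omega> + max 0 (Xd i k (Suc s) \<omega> - dl * real (Suc s))) + max 0 (q * Yd i s \<omega> - dl * real s))"
  proof -
    have s1: "(\<Sum>k\<in>?I. (lam i k + dl) * t + Zp i k (Suc s) \<omega>) = t * (\<Sum>k\<in>?I. lam i k) + t * real (card ?I) * dl + (\<Sum>k\<in>?I. Zp i k (Suc s) \<omega>)"
      by (simp add: sum.distrib sum_distrib_left sum_distrib_right algebra_simps)
    have s2: "(\<Sum>k\<in>?I. dl * t + max 0 (Xd i k (Suc s) \<omega> - dl * real (Suc s))) = t * real (card ?I) * dl + (\<Sum>k\<in>?I. max 0 (Xd i k (Suc s) \<omega> - dl * real (Suc s)))"
      by (simp add: sum.distrib algebra_simps)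
    have s3: "(\<Sum>k\<in>?I. lam i k + eps) = (\<Sum>k\<in>?I. lam i k) + real (card ?I) * eps"
      by (simp add: sum.distrib)
    have s4: "(\<Sum>k\<in>?I. Zp i k (Suc s) \<omega> + max 0 (Xd i k (Suc s) \<omega> - dl * real (Suc s))) = (\<Sum>k\<in>?I. Zp i k (Suc s) \<omega>) + (\<Sum>k\<in>?I. max 0 (Xd i k (Suc s) \<omega> - dl * real (Suc s)))"
      by (simp add: sum.distrib)
    have s5: "t * ((\<Sum>k\<in>?I. lam i k) + real (card ?I) * eps) = t * (\<Sum>k\<in>?I. lam i k) + 3 * (t * real (card ?I) * dl)"
    proof -
      have "real (card ?I) * eps = 3 * (real (card ?I) * dl)" by (simp add: dl_def)
      then show ?thesis by (simp add: distrib_left mult.assoc)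
    qed
    show ?thesis unfolding s3 using s1 s2 s4 s5 by linarith
  qed
  also have "\<dots> \<le> t * (q * p i) - t * 1 * dl - q * p i * real s + dl * real s
       + ((\<Sum>k\<in>?I. Zp i k (Suc s) \<omega> + max 0 (Xd i k (Suc s) \<omega> - dl * real (Suc s))) + max 0 (q * Yd i s \<omega> - dl * real s))"
  proof -
    have "t * (\<Sum>k\<in>?I. lam i k + eps) \<le> t * (q * p i)" using lam_sum[OF i] t by (intro mult_left_mono) auto
    moreover have "t * 1 * dl \<le> t * real (card ?I) * dl" using cI dl_pos t
      by (intro mult_right_mono mult_left_mono) auto
    ultimately show ?thesis by linarith
  qed
  also have "\<dots> \<le> Psi i s \<omega>" unfolding Psi_def t using dl_pos by (simp add: algebra_simps)
  finally show ?thesis .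
qed

lemma U_main:
  assumes ij: "(i, j) \<in> pairs K" and w: "\<omega> \<in> space M"
  shows "real (U i j (Suc s) \<omega>) \<le> Psi i s \<omega> + Psi j s \<omega>
     + (if U i j s \<omega> \<le> F i j s \<omega> then real (F i j s \<omega>) - real (R i j s \<omega>) else 0) + real (A i j s \<omega>)"
proof (cases "U i j s \<omega> \<le> F i j s \<omega>")
  case True
  have "U i j s \<omega> = F i j s \<omega>" using True od_dem[OF ij] by (simp add: le_antisym)
  moreover have "R i j s \<omega> \<le> F i j s \<omega>" using R_le_F[OF ij w] .
  ultimately have "real (U i j (Suc s) \<omega>) = real (F i j s \<omega>) - real (R i j s \<omega>) + real (A i j s \<omega>)"
    using U_Suc[OF ij w, of s] by (simp add: of_nat_diff)
  moreover have "Psi i s \<omega> \<ge> 0" "Psi j s \<omega> \<ge> 0" using Psi_nonneg ij by (auto simp: pairs_def)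
  ultimately show ?thesis using True by simp
next
  case False
  have i: "i \<in> {1..K}" and j: "j \<in> {1..K}" using ij by (auto simp: pairs_def)
  have pi: "Psi i s \<omega> \<ge> 0" "Psi j s \<omega> \<ge> 0" using Psi_nonneg i j by auto
  from exhaust[OF ij w] False have "Dc i (Suc s) \<omega> = Gc i s \<omega> \<or> Dc j (Suc s) \<omega> = Gc j s \<omega>" by simp
  then have "real (U i j (Suc s) \<omega>) \<le> Psi i s \<omega> + Psi j s \<omega>"
  proof
    assume "Dc i (Suc s) \<omega> = Gc i s \<omega>"
    then show ?thesis using psi_bound[OF ij w] pi by fastforce
  next
    assume "Dc j (Suc s) \<omega> = Gc j s \<omega>"
    then show ?thesis using psi_bound[OF pairs_sym[OF ij] w] pi U_sym[OF ij] by fastforce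
  qed
  then show ?thesis using False by simp
qed

end

context qsw
begin

interpretation P: prob_space M by (rule M)

lemma real_meas[measurable (raw)]:
  "f \<in> measurable N (count_space UNIV) \<Longrightarrow> (\<lambda>x. real (f x :: nat)) \<in> borel_measurable N"
  by (rule measurable_compose[of f N "count_space UNIV"]) auto

lemma sum_meas_nat:
  "(\<And>t. t < n \<Longrightarrow> f t \<in> measurable N (count_space UNIV)) \<Longrightarrow>
    (\<lambda>\<omega>. \<Sum>t<(n::nat). (f t \<omega> :: nat)) \<in> measurable N (count_space UNIV)"
proof (induction n)
  case 0 then show ?case by simp
next
  case (Suc n)
  have [measurable]: "f n \<in> measurable N (count_space UNIV)" using Suc.prems by simp
  have [measurable]: "(\<lambda>\<omega>. \<Sum>t<n. (f t \<omega> :: nat)) \<in> measurable N (count_space UNIV)"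
    using Suc by simp
  show ?case by simp
qed

definition pre :: "src \<Rightarrow> 'a set set" where
  "pre i = {sources C A S i -` B \<inter> space M | B. B \<in> sets seqM}"
definition Gm :: "src set \<Rightarrow> 'a measure" where
  "Gm I1 = sigma (space M) (\<Union>i\<in>I1 \<inter> src_index K. pre i)"

lemma rv: "i \<in> src_index K \<Longrightarrow> sources C A S i \<in> measurable M seqM"
  using indep unfolding P.indep_vars_def2 by auto

lemma pre_sub: "i \<in> src_index K \<Longrightarrow> pre i \<subseteq> sets M"
  unfolding pre_def using rv by (auto intro: measurable_sets)

lemma gens_pow: "(\<Union>i\<in>I1 \<inter> src_index K. pre i) \<subseteq> Pow (space M)"
  unfolding pre_def by auto

lemma space_Gm[simp]: "space (Gm I1) = space M"
  unfolding Gm_def by (simp add: space_measure_of_conv)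

lemma sets_Gm: "sets (Gm I1) = sigma_sets (space M) (\<Union>i\<in>I1 \<inter> src_index K. pre i)"
  unfolding Gm_def using gens_pow by (simp add: sets_measure_of)

lemma Gm_sub_M: "sets (Gm I1) \<subseteq> sets M"
  unfolding sets_Gm using pre_sub sigma_sets_le_sets_iff[of M] by auto

lemma Gm_mono: "I1 \<subseteq> I2 \<Longrightarrow> sets (Gm I1) \<subseteq> sets (Gm I2)"
  unfolding sets_Gm by (intro sigma_sets_mono') auto

lemma meas_mono: "I1 \<subseteq> I2 \<Longrightarrow> f \<in> measurable (Gm I1) N \<Longrightarrow> f \<in> measurable (Gm I2) N"
  using measurable_mono[of N N "Gm I1" "Gm I2"] Gm_mono by auto

lemma meas_M: "f \<in> measurable (Gm I1) N \<Longrightarrow> f \<in> measurable M N"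
  using measurable_mono[of N N "Gm I1" M] Gm_sub_M by auto

lemma comp_meas:
  assumes i: "i \<in> I1" "i \<in> src_index K"
  shows "(\<lambda>\<omega>. sources C A S i \<omega> n) \<in> measurable (Gm I1) (count_space UNIV)"
proof (rule measurableI)
  fix B :: "nat set"
  have c: "(\<lambda>x::nat\<Rightarrow>nat. x n) \<in> measurable seqM (count_space UNIV)"
    unfolding seqM_def by (rule measurable_component_singleton) auto
  have sp: "space seqM = UNIV" unfolding seqM_def by (simp add: space_PiM)
  have "{x::nat\<Rightarrow>nat. x n \<in> B} \<in> sets seqM"
    using measurable_sets[OF c, of B] sp by (simp add: vimage_def)
  then have "sources C A S i -` {x. x n \<in> B} \<inter> space M \<in> pre i" unfolding pre_def by blast
  moreover have "(\<lambda>\<omega>. sources C A S i \<omega> n) -` B \<inter> space (Gm I1) = sources C A S i -` {x. x n \<in> B} \<inter> space M"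
    by auto
  ultimately show "(\<lambda>\<omega>. sources C A S i \<omega> n) -` B \<inter> space (Gm I1) \<in> sets (Gm I1)"
    unfolding sets_Gm using i by auto
qed auto

lemma C_meas: "i \<in> {1..K} \<Longrightarrow> SrcC i \<tau> \<in> I1 \<Longrightarrow> C i \<tau> \<in> measurable (Gm I1) (count_space UNIV)"
  using comp_meas[of "SrcC i \<tau>" I1 0] by (auto simp: src_index_def)

lemma A_meas:
  assumes ab: "(a, b) \<in> pairs K" and I: "SrcA (min a b) (max a b) \<in> I1"
  shows "A a b \<tau> \<in> measurable (Gm I1) (count_space UNIV)"
proof -
  have "SrcA (min a b) (max a b) \<in> src_index K" using ab by (auto simp: src_index_def pairs_def min_def max_def)
  from comp_meas[OF I this, of \<tau>] have "(\<lambda>\<omega>. A (min a b) (max a b) \<tau> \<omega>) \<in> measurable (Gm I1) (count_space UNIV)"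
    by simp
  moreover have "A (min a b) (max a b) \<tau> = A a b \<tau>" using A_sym by (cases "a \<le> b") (auto simp: min_def max_def)
  ultimately show ?thesis by simp
qed

lemma S_meas:
  assumes ab: "(a, b) \<in> pairs K" and I: "SrcS (min a b) (max a b) \<tau> k \<in> I1"
  shows "S a b \<tau> k \<in> measurable (Gm I1) (count_space UNIV)"
proof -
  have "SrcS (min a b) (max a b) \<tau> k \<in> src_index K" using ab by (auto simp: src_index_def pairs_def min_def max_def)
  from comp_meas[OF I this, of 0] have "(\<lambda>\<omega>. S (min a b) (max a b) \<tau> k \<omega>) \<in> measurable (Gm I1) (count_space UNIV)"
    by simp
  moreover have "S (min a b) (max a b) \<tau> k = S a b \<tau> k" using S_sym by (cases "a \<le> b") (auto simp: min_def max_def)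
  ultimately show ?thesis by simp
qed

definition Ipast :: "nat \<Rightarrow> src set" where
  "Ipast s = {SrcA i j | i j. True} \<union> {SrcC i \<tau> | i \<tau>. \<tau> < s} \<union> {SrcS i j \<tau> k | i j \<tau> k. \<tau> < s}"

lemma Ipast_mono: "t \<le> s \<Longrightarrow> Ipast t \<subseteq> Ipast s"
  unfolding Ipast_def by auto

lemma past_sub: "sets (past M K A C S s) \<subseteq> sets (Gm (Ipast s))" and space_past: "space (past M K A C S s) = space M"
proof -
  define Xs where "Xs = ((\<Union>(i, j) \<in> pairs K. \<Union>\<tau> \<in> {..<s}. {A i j \<tau>} \<union> (\<Union>k. {S i j \<tau> k})) \<union>
      (\<Union>i \<in> {1..K}. \<Union>\<tau> \<in> {..<s}. {C i \<tau>}))"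
  define G where "G = (\<Union>X\<in>Xs. {X -` B \<inter> space M | B. True})"
  have pd: "past M K A C S s = sigma (space M) G" unfolding past_def gen_sigma_def Xs_def G_def by simp
  have Gp: "G \<subseteq> Pow (space M)" unfolding G_def by auto
  have Xm: "X \<in> measurable (Gm (Ipast s)) (count_space UNIV)" if "X \<in> Xs" for X
    using that unfolding Xs_def
    by (auto intro!: A_meas S_meas C_meas simp: Ipast_def)
  have "G \<subseteq> sets (Gm (Ipast s))"
  proof
    fix g assume "g \<in> G"
    then obtain X B where X: "X \<in> Xs" and g: "g = X -` B \<inter> space M" unfolding G_def by blast
    show "g \<in> sets (Gm (Ipast s))" using measurable_sets[OF Xm[OF X], of B] g by simp
  qed
  then have "sigma_sets (space M) G \<subseteq> sets (Gm (Ipast s))"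
    using sigma_sets_le_sets_iff[of "Gm (Ipast s)" G] by simp
  then show "sets (past M K A C S s) \<subseteq> sets (Gm (Ipast s))" unfolding pd using Gp by (simp add: sets_measure_of)
  show "space (past M K A C S s) = space M" unfolding pd by (simp add: space_measure_of_conv)
qed

lemma F_meas':
  assumes ab: "(a, b) \<in> pairs K" and ts: "\<tau> \<le> s" and I: "Ipast s \<subseteq> I1"
  shows "F a b \<tau> \<in> measurable (Gm I1) (count_space UNIV)"
proof -
  have "F a b \<tau> \<in> measurable (Gm (Ipast \<tau>)) (count_space UNIV)"
    using measurable_mono[of "count_space UNIV" "count_space UNIV" "past M K A C S \<tau>" "Gm (Ipast \<tau>)"]
      past_sub space_past F_meas[OF ab] by auto
  then show ?thesis using meas_mono Ipast_mono[OF ts] I by blast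
qed


lemma Int_stable_pre: "Int_stable (pre i)"
  unfolding Int_stable_def pre_def
proof (intro ballI)
  fix a b assume a: "a \<in> {sources C A S i -` B \<inter> space M |B. B \<in> sets seqM}"
    and b: "b \<in> {sources C A S i -` B \<inter> space M |B. B \<in> sets seqM}"
  then obtain Ba Bb where "a = sources C A S i -` Ba \<inter> space M" "Ba \<in> sets seqM"
    "b = sources C A S i -` Bb \<inter> space M" "Bb \<in> sets seqM" by blast
  then show "a \<inter> b \<in> {sources C A S i -` B \<inter> space M |B. B \<in> sets seqM}"
    by (intro CollectI exI[of _ "Ba \<inter> Bb"]) auto
qed

lemma indep_Gm:
  assumes disj: "I1 \<inter> I2 = {}"
  shows "P.indep_set (sets (Gm I1)) (sets (Gm I2))"
proof -
  define Ib where "Ib = case_bool (I1 \<inter> src_index K) (I2 \<inter> src_index K)"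
  have ind: "P.indep_sets pre (src_index K)"
    using indep unfolding P.indep_vars_def2 pre_def by auto
  have ind2: "P.indep_sets pre (\<Union>j\<in>UNIV. Ib j)"
    by (rule P.indep_sets_mono_index[OF _ ind]) (auto simp: Ib_def split: bool.splits)
  have dj: "disjoint_family_on Ib UNIV"
    unfolding disjoint_family_on_def Ib_def using disj by (auto split: bool.split)
  have "P.indep_sets (\<lambda>j. sigma_sets (space M) (\<Union>i\<in>Ib j. pre i)) UNIV"
    by (rule P.indep_sets_collect_sigma[OF ind2 Int_stable_pre dj])
  then show ?thesis unfolding P.indep_set_def
    by (rule P.indep_sets_mono_sets) (auto simp: Ib_def sets_Gm split: bool.split)
qed

lemma indep_int:
  fixes g h :: "'a \<Rightarrow> real"
  assumes disj: "I1 \<inter> I2 = {}"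
    and g: "g \<in> borel_measurable (Gm I1)" and h: "h \<in> borel_measurable (Gm I2)"
    and ig: "integrable M g" and ih: "integrable M h"
  shows "(\<integral>\<omega>. g \<omega> * h \<omega> \<partial>M) = (\<integral>\<omega>. g \<omega> \<partial>M) * (\<integral>\<omega>. h \<omega> \<partial>M)"
proof -
  have gM: "g \<in> borel_measurable M" using meas_M[OF g] .
  have hM: "h \<in> borel_measurable M" using meas_M[OF h] .
  have sg: "sigma_sets (space M) {g -` B \<inter> space M | B. B \<in> sets borel} \<subseteq> sets (Gm I1)"
  proof -
    have "{g -` B \<inter> space M | B. B \<in> sets borel} \<subseteq> sets (Gm I1)"
      using measurable_sets[OF g] by auto
    then show ?thesis using sigma_sets_le_sets_iff[of "Gm I1"] by simp
  qed
  have sh: "sigma_sets (space M) {h -` B \<inter> space M | B. B \<in> sets borel} \<subseteq> sets (Gm I2)"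
  proof -
    have "{h -` B \<inter> space M | B. B \<in> sets borel} \<subseteq> sets (Gm I2)"
      using measurable_sets[OF h] by auto
    then show ?thesis using sigma_sets_le_sets_iff[of "Gm I2"] by simp
  qed
  have "P.indep_set (sigma_sets (space M) {g -` B \<inter> space M | B. B \<in> sets borel})
                    (sigma_sets (space M) {h -` B \<inter> space M | B. B \<in> sets borel})"
    using indep_Gm[OF disj] unfolding P.indep_set_def
    by (rule P.indep_sets_mono_sets) (use sg sh in \<open>auto split: bool.split\<close>)
  then have "P.indep_var borel g borel h" unfolding P.indep_var_eq using gM hM by simp
  then show ?thesis using P.indep_var_lebesgue_integral ig ih by blast
qed


lemma A_meas':
  "(a, b) \<in> pairs K \<Longrightarrow> Ipast s \<subseteq> I1 \<Longrightarrow> A a b \<tau> \<in> measurable (Gm I1) (count_space UNIV)"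
  by (rule A_meas) (auto simp: Ipast_def)

lemma S_meas':
  "(a, b) \<in> pairs K \<Longrightarrow> \<tau> < s \<Longrightarrow> Ipast s \<subseteq> I1 \<Longrightarrow> S a b \<tau> k \<in> measurable (Gm I1) (count_space UNIV)"
  by (rule S_meas) (auto simp: Ipast_def)

lemma C_meas':
  "i \<in> {1..K} \<Longrightarrow> \<tau> < s \<Longrightarrow> Ipast s \<subseteq> I1 \<Longrightarrow> C i \<tau> \<in> measurable (Gm I1) (count_space UNIV)"
  by (rule C_meas) (auto simp: Ipast_def)

lemma R_meas:
  assumes ab: "(a, b) \<in> pairs K" and ts: "\<tau> < s" and I: "Ipast s \<subseteq> I1"
  shows "R a b \<tau> \<in> measurable (Gm I1) (count_space UNIV)"
proof -
  have eq: "R a b \<tau> = (\<lambda>\<omega>. (\<lambda>n \<omega>. \<Sum>k<n. S a b \<tau> k \<omega>) (F a b \<tau> \<omega>) \<omega>)"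
    using R_def[OF ab] by auto
  note [measurable] = S_meas'[OF ab ts I]
  show ?thesis unfolding eq
    by (rule measurable_compose_countable'[where I=UNIV]) (use F_meas'[OF ab _ I, of \<tau>] ts in auto)
qed

lemma UE_meas:
  assumes ab: "(a, b) \<in> pairs K" and I: "Ipast s \<subseteq> I1"
  shows "\<tau> \<le> s \<Longrightarrow> U a b \<tau> \<in> measurable (Gm I1) (count_space UNIV) \<and> E a b \<tau> \<in> measurable (Gm I1) (count_space UNIV)"
proof (induction \<tau>)
  case 0
  have "U a b 0 = (\<lambda>_. 0)" "E a b 0 = (\<lambda>_. 0)" using init by auto
  then show ?case by simp
next
  case (Suc \<tau>)
  then have ts: "\<tau> < s" by simp
  have [measurable]: "U a b \<tau> \<in> measurable (Gm I1) (count_space UNIV)" "E a b \<tau> \<in> measurable (Gm I1) (count_space UNIV)"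
    using Suc by auto
  note [measurable] = R_meas[OF ab ts I] A_meas'[OF ab I]
  have "U a b (Suc \<tau>) = (\<lambda>\<omega>. (U a b \<tau> \<omega> - E a b \<tau> \<omega> - R a b \<tau> \<omega>) + A a b \<tau> \<omega>)"
    "E a b (Suc \<tau>) = (\<lambda>\<omega>. (E a b \<tau> \<omega> + R a b \<tau> \<omega>) - U a b \<tau> \<omega>)"
    using U_step[OF ab] E_step[OF ab] by auto
  then show ?case by simp
qed

lemma U_meas: "(a, b) \<in> pairs K \<Longrightarrow> Ipast s \<subseteq> I1 \<Longrightarrow> \<tau> \<le> s \<Longrightarrow> U a b \<tau> \<in> measurable (Gm I1) (count_space UNIV)"
  using UE_meas by blast

lemma Gc_meas:
  assumes i: "i \<in> {1..K}" and ts: "\<tau> \<le> s" and I: "Ipast s \<subseteq> I1"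
  shows "Gc i \<tau> \<in> measurable (Gm I1) (count_space UNIV)"
proof -
  have [measurable]: "C i t \<in> measurable (Gm I1) (count_space UNIV)" if "t < \<tau>" for t
    using C_meas'[OF i _ I, of t] that ts by simp
  have eq: "Gc i \<tau> = (\<lambda>\<omega>. \<Sum>t<\<tau>. C i t \<omega>)" unfolding Gc_def by auto
  show ?thesis unfolding eq by (intro sum_meas_nat) auto
qed

lemma Nc_meas:
  assumes ab: "(a, b) \<in> pairs K" and ts: "\<tau> \<le> Suc s" and I: "Ipast s \<subseteq> I1"
  shows "Nc a b \<tau> \<in> measurable (Gm I1) (count_space UNIV)"
proof -
  have [measurable]: "F a b t \<in> measurable (Gm I1) (count_space UNIV)" if "t < \<tau>" for t
    using F_meas'[OF ab _ I, of t] that ts by simp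
  have eq: "Nc a b \<tau> = (\<lambda>\<omega>. \<Sum>t<\<tau>. F a b t \<omega>)" unfolding Nc_def by auto
  show ?thesis unfolding eq by (intro sum_meas_nat) auto
qed

lemma Sc_meas:
  assumes ab: "(a, b) \<in> pairs K" and ts: "\<tau> \<le> s" and I: "Ipast s \<subseteq> I1"
  shows "Sc a b \<tau> \<in> measurable (Gm I1) (count_space UNIV)"
proof -
  have [measurable]: "R a b t \<in> measurable (Gm I1) (count_space UNIV)" if "t < \<tau>" for t
    using R_meas[OF ab _ I, of t] that ts by simp
  have eq: "Sc a b \<tau> = (\<lambda>\<omega>. \<Sum>t<\<tau>. R a b t \<omega>)" unfolding Sc_def by auto
  show ?thesis unfolding eq by (intro sum_meas_nat) auto
qed

lemma Xd_meas:
  assumes ab: "(a, b) \<in> pairs K" and ts: "\<tau> \<le> s" and I: "Ipast s \<subseteq> I1"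
  shows "Xd a b \<tau> \<in> borel_measurable (Gm I1)"
proof -
  have t2: "\<tau> \<le> Suc s" using ts by simp
  have m1: "(\<lambda>\<omega>. real (Sc a b \<tau> \<omega>)) \<in> borel_measurable (Gm I1)"
    by (rule real_meas[OF Sc_meas[OF ab ts I]])
  have m2: "(\<lambda>\<omega>. real (Nc a b \<tau> \<omega>)) \<in> borel_measurable (Gm I1)"
    by (rule real_meas[OF Nc_meas[OF ab t2 I]])
  have eq: "Xd a b \<tau> = (\<lambda>\<omega>. q * real (Nc a b \<tau> \<omega>) - real (Sc a b \<tau> \<omega>))" unfolding Xd_def by auto
  show ?thesis unfolding eq using m1 m2 by (intro borel_measurable_diff borel_measurable_times) auto
qed

lemma Arr_meas:
  assumes ab: "(a, b) \<in> pairs K" and I: "Ipast s \<subseteq> I1"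
  shows "Arr a b \<tau> \<in> borel_measurable (Gm I1)"
proof -
  note [measurable] = A_meas'[OF ab I]
  have eq: "Arr a b \<tau> = (\<lambda>\<omega>. \<Sum>t<\<tau>. real (A a b t \<omega>))" unfolding Arr_def by auto
  show ?thesis unfolding eq by measurable
qed

end

context qsw
begin

interpretation P: prob_space M by (rule M)

lemma bint: "f \<in> borel_measurable M \<Longrightarrow> (\<And>\<omega>. \<omega> \<in> space M \<Longrightarrow> \<bar>f \<omega>\<bar> \<le> B) \<Longrightarrow> integrable M (f :: 'a \<Rightarrow> real)"
  by (rule P.integrable_const_bound[where B=B]) auto

definition Icoin :: "nat \<Rightarrow> nat \<Rightarrow> nat \<Rightarrow> nat \<Rightarrow> src set" where
  "Icoin a b s k = Ipast s \<union> {SrcS (min a b) (max a b) s l | l. l < k}"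

lemma Ipast_Icoin: "Ipast s \<subseteq> Icoin a b s k" unfolding Icoin_def by auto

lemma intS: assumes ab: "(a, b) \<in> pairs K" shows "(\<integral>\<omega>. real (S a b \<tau> k \<omega>) \<partial>M) = q"
proof -
  have Sm: "S a b \<tau> k \<in> measurable M (count_space UNIV)"
    using meas_M[OF S_meas'[OF ab _ order.refl, of \<tau> "Suc \<tau>"]] by simp
  have set: "{\<omega> \<in> space M. S a b \<tau> k \<omega> = 1} \<in> sets M" using Sm by measurable
  have eq: "real (S a b \<tau> k \<omega>) = indicator {\<omega> \<in> space M. S a b \<tau> k \<omega> = 1} \<omega>" if w: "\<omega> \<in> space M" for \<omega>
  proof -
    have "S a b \<tau> k \<omega> \<le> 1" using S_bern[OF ab] w by auto
    then show ?thesis using w by (cases "S a b \<tau> k \<omega>") (auto simp: indicator_def)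
  qed
  have "(\<integral>\<omega>. real (S a b \<tau> k \<omega>) \<partial>M) = (\<integral>\<omega>. indicator {\<omega> \<in> space M. S a b \<tau> k \<omega> = 1} \<omega> \<partial>M)"
    by (rule Bochner_Integration.integral_cong[OF refl eq])
  also have "\<dots> = q" using S_bern[OF ab] by (simp add: Int_absorb2 set)
  finally show ?thesis .
qed

lemma intC: assumes i: "i \<in> {1..K}" shows "(\<integral>\<omega>. real (C i \<tau> \<omega>) \<partial>M) = p i"
proof -
  have Cm: "C i \<tau> \<in> measurable M (count_space UNIV)"
    using meas_M[OF C_meas'[OF i _ order.refl, of \<tau> "Suc \<tau>"]] by simp
  have set: "{\<omega> \<in> space M. C i \<tau> \<omega> = 1} \<in> sets M" using Cm by measurable
  have eq: "real (C i \<tau> \<omega>) = indicator {\<omega> \<in> space M. C i \<tau> \<omega> = 1} \<omega>" if w: "\<omega> \<in> space M" for \<omega>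
  proof -
    have "C i \<tau> \<omega> \<le> 1" using C_bern[OF i] w by auto
    then show ?thesis using w by (cases "C i \<tau> \<omega>") (auto simp: indicator_def)
  qed
  have "(\<integral>\<omega>. real (C i \<tau> \<omega>) \<partial>M) = (\<integral>\<omega>. indicator {\<omega> \<in> space M. C i \<tau> \<omega> = 1} \<omega> \<partial>M)"
    by (rule Bochner_Integration.integral_cong[OF refl eq])
  also have "\<dots> = p i" using C_bern[OF i] by (simp add: Int_absorb2 set)
  finally show ?thesis .
qed

lemma coin_ind:
  assumes ab: "(a, b) \<in> pairs K" and W: "W \<in> borel_measurable (Gm (Icoin a b s k))"
    and Wb: "\<And>\<omega>. \<omega> \<in> space M \<Longrightarrow> \<bar>W \<omega>\<bar> \<le> B"
  shows "(\<integral>\<omega>. W \<omega> * real (S a b s k \<omega>) \<partial>M) = q * (\<integral>\<omega>. W \<omega> \<partial>M)"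
proof -
  let ?I2 = "{SrcS (min a b) (max a b) s k}"
  have disj: "Icoin a b s k \<inter> ?I2 = {}" unfolding Icoin_def Ipast_def by auto
  have Sm: "S a b s k \<in> measurable (Gm ?I2) (count_space UNIV)"
    by (rule S_meas[OF ab]) auto
  have Sr: "(\<lambda>\<omega>. real (S a b s k \<omega>)) \<in> borel_measurable (Gm ?I2)" by (rule real_meas[OF Sm])
  have iW: "integrable M W" using bint[OF meas_M[OF W] Wb] .
  have iS: "integrable M (\<lambda>\<omega>. real (S a b s k \<omega>))"
    by (rule bint[OF meas_M[OF Sr], of 1]) (use S_bern[OF ab] in auto)
  show ?thesis using indep_int[OF disj W Sr iW iS] intS[OF ab] by simp
qed

lemma gen_ind:
  assumes i: "i \<in> {1..K}" and W: "W \<in> borel_measurable (Gm (Ipast s))"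
    and Wb: "\<And>\<omega>. \<omega> \<in> space M \<Longrightarrow> \<bar>W \<omega>\<bar> \<le> B"
  shows "(\<integral>\<omega>. W \<omega> * real (C i s \<omega>) \<partial>M) = p i * (\<integral>\<omega>. W \<omega> \<partial>M)"
proof -
  let ?I2 = "{SrcC i s}"
  have disj: "Ipast s \<inter> ?I2 = {}" unfolding Ipast_def by auto
  have Cm: "C i s \<in> measurable (Gm ?I2) (count_space UNIV)"
    by (rule C_meas[OF i]) auto
  have Cr: "(\<lambda>\<omega>. real (C i s \<omega>)) \<in> borel_measurable (Gm ?I2)" by (rule real_meas[OF Cm])
  have iW: "integrable M W" using bint[OF meas_M[OF W] Wb] .
  have iC: "integrable M (\<lambda>\<omega>. real (C i s \<omega>))"
    by (rule bint[OF meas_M[OF Cr], of 1]) (use C_bern[OF i] in auto)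
  show ?thesis using indep_int[OF disj W Cr iW iC] intC[OF i] by (simp add: mult.commute)
qed

end

context qsw
begin

interpretation P: prob_space M by (rule M)

lemma FM: "(a, b) \<in> pairs K \<Longrightarrow> F a b \<tau> \<in> measurable M (count_space UNIV)"
  using meas_M[OF F_meas'[OF _ order.refl order.refl]] by blast
lemma SM: "(a, b) \<in> pairs K \<Longrightarrow> S a b \<tau> l \<in> measurable M (count_space UNIV)"
  using meas_M[OF S_meas'[OF _ _ order.refl, of a b \<tau> "Suc \<tau>"]] by simp
lemma XdM: "(a, b) \<in> pairs K \<Longrightarrow> Xd a b \<tau> \<in> borel_measurable M"
  using meas_M[OF Xd_meas[OF _ order.refl order.refl]] by blast
lemma CM: "i \<in> {1..K} \<Longrightarrow> C i \<tau> \<in> measurable M (count_space UNIV)"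
  using meas_M[OF C_meas'[OF _ _ order.refl, of i \<tau> "Suc \<tau>"]] by simp
lemma GcM: "i \<in> {1..K} \<Longrightarrow> Gc i \<tau> \<in> measurable M (count_space UNIV)"
  using meas_M[OF Gc_meas[OF _ order.refl order.refl]] by blast
lemma NcM: "(a, b) \<in> pairs K \<Longrightarrow> Nc a b \<tau> \<in> measurable M (count_space UNIV)"
  using meas_M[OF Nc_meas[OF _ _ order.refl, of a b \<tau> \<tau>]] by simp
lemma UM: "(a, b) \<in> pairs K \<Longrightarrow> U a b \<tau> \<in> measurable M (count_space UNIV)"
  using meas_M[OF U_meas[OF _ order.refl order.refl]] by blast
lemma RM: "(a, b) \<in> pairs K \<Longrightarrow> R a b \<tau> \<in> measurable M (count_space UNIV)"
  using meas_M[OF R_meas[OF _ _ order.refl, of a b \<tau> "Suc \<tau>"]] by simp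
lemma AM: "(a, b) \<in> pairs K \<Longrightarrow> A a b \<tau> \<in> measurable M (count_space UNIV)"
  by (rule meas_M, rule A_meas', assumption, rule order.refl)
lemma ArrM: "(a, b) \<in> pairs K \<Longrightarrow> Arr a b \<tau> \<in> borel_measurable M"
  by (rule meas_M, rule Arr_meas, assumption, rule order.refl)

lemma Sc_le_Nc: "(a, b) \<in> pairs K \<Longrightarrow> \<omega> \<in> space M \<Longrightarrow> Sc a b t \<omega> \<le> Nc a b t \<omega>"
  unfolding Sc_def Nc_def by (intro sum_mono R_le_F) auto

lemma Xd_bound: assumes ab: "(a, b) \<in> pairs K" and w: "\<omega> \<in> space M"
  shows "\<bar>Xd a b t \<omega>\<bar> \<le> real t"
proof -
  have "Sc a b t \<omega> \<le> Nc a b t \<omega>" "Nc a b t \<omega> \<le> t" using Sc_le_Nc[OF ab w] Nc_le[OF ab w] by auto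
  then have "real (Sc a b t \<omega>) \<le> real (Nc a b t \<omega>)" "real (Nc a b t \<omega>) \<le> real t" by auto
  then show ?thesis unfolding Xd_def using q
    by (smt (verit) mult_left_le_one_le of_nat_0_le_iff mult_nonneg_nonneg)
qed

definition Pk :: "nat \<Rightarrow> nat \<Rightarrow> nat \<Rightarrow> nat \<Rightarrow> 'a \<Rightarrow> real" where
  "Pk a b \<tau> k \<omega> = Xd a b \<tau> \<omega> + (\<Sum>l<k. if l < F a b \<tau> \<omega> then q - real (S a b \<tau> l \<omega>) else 0)"

lemma Pk_meas: assumes ab: "(a, b) \<in> pairs K"
  shows "Pk a b \<tau> k \<in> borel_measurable (Gm (Icoin a b \<tau> k))"
proof (induction k)
  case 0
  have "Pk a b \<tau> 0 = Xd a b \<tau>" by (auto simp: Pk_def)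
  then show ?case using Xd_meas[OF ab order.refl Ipast_Icoin] by simp
next
  case (Suc k)
  have I: "Icoin a b \<tau> k \<subseteq> Icoin a b \<tau> (Suc k)" unfolding Icoin_def by auto
  have [measurable]: "Pk a b \<tau> k \<in> borel_measurable (Gm (Icoin a b \<tau> (Suc k)))"
    using meas_mono[OF I Suc] .
  have [measurable]: "F a b \<tau> \<in> measurable (Gm (Icoin a b \<tau> (Suc k))) (count_space UNIV)"
    using F_meas'[OF ab order.refl Ipast_Icoin] .
  have Sm: "S a b \<tau> k \<in> measurable (Gm (Icoin a b \<tau> (Suc k))) (count_space UNIV)"
    by (rule S_meas[OF ab]) (auto simp: Icoin_def)
  have [measurable]: "(\<lambda>\<omega>. real (S a b \<tau> k \<omega>)) \<in> borel_measurable (Gm (Icoin a b \<tau> (Suc k)))"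
    by (rule real_meas[OF Sm])
  have eq: "Pk a b \<tau> (Suc k) = (\<lambda>\<omega>. Pk a b \<tau> k \<omega> + (if k < F a b \<tau> \<omega> then q - real (S a b \<tau> k \<omega>) else 0))"
    by (auto simp: Pk_def)
  show ?case unfolding eq by measurable
qed

lemma Pk_bound: assumes ab: "(a, b) \<in> pairs K" and w: "\<omega> \<in> space M"
  shows "\<bar>Pk a b \<tau> k \<omega>\<bar> \<le> real \<tau> + real k"
proof -
  have "\<bar>\<Sum>l<k. if l < F a b \<tau> \<omega> then q - real (S a b \<tau> l \<omega>) else 0\<bar> \<le> (\<Sum>l<k. \<bar>if l < F a b \<tau> \<omega> then q - real (S a b \<tau> l \<omega>) else 0\<bar>)"
    by (rule sum_abs)
  also have "\<dots> \<le> (\<Sum>l<k. 1)"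
  proof (intro sum_mono)
    fix l have "S a b \<tau> l \<omega> \<le> 1" using S_bern[OF ab] w by auto
    then show "\<bar>if l < F a b \<tau> \<omega> then q - real (S a b \<tau> l \<omega>) else 0\<bar> \<le> 1" using q
      by (cases "S a b \<tau> l \<omega>") auto
  qed
  finally show ?thesis unfolding Pk_def using Xd_bound[OF ab w, of \<tau>] by simp
qed

lemma PkM: "(a, b) \<in> pairs K \<Longrightarrow> Pk a b \<tau> k \<in> borel_measurable M"
  using meas_M[OF Pk_meas] .

lemma Pk_step:
  assumes ab: "(a, b) \<in> pairs K"
  shows "(\<integral>\<omega>. (Pk a b \<tau> (Suc k) \<omega>)\<^sup>2 \<partial>M) \<le> (\<integral>\<omega>. (Pk a b \<tau> k \<omega>)\<^sup>2 \<partial>M) + (\<integral>\<omega>. (if k < F a b \<tau> \<omega> then 1 else 0) \<partial>M)"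
proof -
  define W where "W = (\<lambda>\<omega>. if k < F a b \<tau> \<omega> then Pk a b \<tau> k \<omega> else 0)"
  define D where "D = (\<lambda>\<omega>. if k < F a b \<tau> \<omega> then q - real (S a b \<tau> k \<omega>) else 0)"
  note [measurable] = PkM[OF ab] FM[OF ab] SM[OF ab] real_meas[OF SM[OF ab]]
  have WG: "W \<in> borel_measurable (Gm (Icoin a b \<tau> k))"
  proof -
    have [measurable]: "Pk a b \<tau> k \<in> borel_measurable (Gm (Icoin a b \<tau> k))" using Pk_meas[OF ab] .
    have [measurable]: "F a b \<tau> \<in> measurable (Gm (Icoin a b \<tau> k)) (count_space UNIV)"
      using F_meas'[OF ab order.refl Ipast_Icoin] .
    show ?thesis unfolding W_def by measurable
  qed
  have Wb: "\<bar>W \<omega>\<bar> \<le> real \<tau> + real k" if "\<omega> \<in> space M" for \<omega>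
    using Pk_bound[OF ab that] by (auto simp: W_def)
  have Sb: "S a b \<tau> k \<omega> \<le> 1" if "\<omega> \<in> space M" for \<omega> using S_bern[OF ab] that by auto
  have Db: "\<bar>D \<omega>\<bar> \<le> 1" if "\<omega> \<in> space M" for \<omega> using Sb[OF that] q
    by (cases "S a b \<tau> k \<omega>") (auto simp: D_def)
  have [measurable]: "W \<in> borel_measurable M" "D \<in> borel_measurable M"
    using meas_M[OF WG] by (auto simp: D_def)
  have iW: "integrable M W" by (rule bint[OF _ Wb]) auto
  have iWS: "integrable M (\<lambda>\<omega>. W \<omega> * real (S a b \<tau> k \<omega>))"
    by (rule bint[where B="real \<tau> + real k"]) (use Wb Sb in \<open>auto simp: abs_mult intro: mult_le_one order.trans[OF mult_right_le_one_le]\<close>)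
  have iP2: "integrable M (\<lambda>\<omega>. (Pk a b \<tau> k \<omega>)\<^sup>2)"
  proof (rule bint[where B="(real \<tau> + real k)^2"])
    fix \<omega> assume w: "\<omega> \<in> space M"
    have "\<bar>Pk a b \<tau> k \<omega>\<bar>^2 \<le> (real \<tau> + real k)^2" by (rule power_mono[OF Pk_bound[OF ab w]]) auto
    then show "\<bar>(Pk a b \<tau> k \<omega>)\<^sup>2\<bar> \<le> (real \<tau> + real k)^2" by simp
  qed auto
  have iPD: "integrable M (\<lambda>\<omega>. Pk a b \<tau> k \<omega> * D \<omega>)"
  proof (rule bint[where B="real \<tau> + real k"])
    fix \<omega> assume w: "\<omega> \<in> space M"
    have "\<bar>Pk a b \<tau> k \<omega>\<bar> * \<bar>D \<omega>\<bar> \<le> (real \<tau> + real k) * 1"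
      by (rule mult_mono[OF Pk_bound[OF ab w] Db[OF w]]) auto
    then show "\<bar>Pk a b \<tau> k \<omega> * D \<omega>\<bar> \<le> real \<tau> + real k" by (simp add: abs_mult)
  qed auto
  have iD2: "integrable M (\<lambda>\<omega>. (D \<omega>)\<^sup>2)"
    by (rule bint[where B=1]) (use Db in \<open>auto simp: abs_square_le_1\<close>)
  have iI: "integrable M (\<lambda>\<omega>. if k < F a b \<tau> \<omega> then 1 else 0 :: real)"
    by (rule bint[where B=1]) auto
  have PD: "(\<lambda>\<omega>. Pk a b \<tau> k \<omega> * D \<omega>) = (\<lambda>\<omega>. q * W \<omega> - W \<omega> * real (S a b \<tau> k \<omega>))"
    by (auto simp: W_def D_def algebra_simps)
  have "(\<integral>\<omega>. Pk a b \<tau> k \<omega> * D \<omega> \<partial>M) = q * (\<integral>\<omega>. W \<omega> \<partial>M) - (\<integral>\<omega>. W \<omega> * real (S a b \<tau> k \<omega>) \<partial>M)"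
    unfolding PD using iW iWS by (simp add: Bochner_Integration.integral_diff)
  also have "\<dots> = 0" using coin_ind[OF ab WG Wb] by simp
  finally have z: "(\<integral>\<omega>. Pk a b \<tau> k \<omega> * D \<omega> \<partial>M) = 0" .
  have sq: "(\<lambda>\<omega>. (Pk a b \<tau> (Suc k) \<omega>)\<^sup>2) = (\<lambda>\<omega>. (Pk a b \<tau> k \<omega>)\<^sup>2 + 2 * (Pk a b \<tau> k \<omega> * D \<omega>) + (D \<omega>)\<^sup>2)"
    by (auto simp: Pk_def D_def power2_eq_square algebra_simps)
  have "(\<integral>\<omega>. (Pk a b \<tau> (Suc k) \<omega>)\<^sup>2 \<partial>M) = (\<integral>\<omega>. (Pk a b \<tau> k \<omega>)\<^sup>2 \<partial>M) + 2 * (\<integral>\<omega>. Pk a b \<tau> k \<omega> * D \<omega> \<partial>M) + (\<integral>\<omega>. (D \<omega>)\<^sup>2 \<partial>M)"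
    unfolding sq using iP2 iPD iD2 by (simp add: Bochner_Integration.integral_add)
  also have "(\<integral>\<omega>. (D \<omega>)\<^sup>2 \<partial>M) \<le> (\<integral>\<omega>. (if k < F a b \<tau> \<omega> then 1 else 0) \<partial>M)"
  proof (rule integral_mono[OF iD2 iI])
    fix \<omega> assume "\<omega> \<in> space M"
    then show "(D \<omega>)\<^sup>2 \<le> (if k < F a b \<tau> \<omega> then 1 else 0)" using Db[of \<omega>]
      by (auto simp: abs_square_le_1 D_def)
  qed
  finally show ?thesis using z by simp
qed


lemma sum_if_less: "(n::nat) \<le> m \<Longrightarrow> (\<Sum>l<m. if l < n then g l else 0) = (\<Sum>l<n. g l)"
proof -
  assume nm: "n \<le> m"
  have "(\<Sum>l<m. if l < n then g l else 0) = (\<Sum>l\<in>{l\<in>{..<m}. l < n}. g l)"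
    by (rule sum.inter_filter[symmetric]) simp
  also have "{l\<in>{..<m}. l < n} = {..<n}" using nm by auto
  finally show ?thesis .
qed

lemma Pk_sum: assumes ab: "(a, b) \<in> pairs K"
  shows "(\<integral>\<omega>. (Pk a b \<tau> k \<omega>)\<^sup>2 \<partial>M) \<le> (\<integral>\<omega>. (Xd a b \<tau> \<omega>)\<^sup>2 \<partial>M) + (\<integral>\<omega>. (\<Sum>l<k. if l < F a b \<tau> \<omega> then 1 else 0) \<partial>M)"
proof (induction k)
  case 0 then show ?case by (simp add: Pk_def)
next
  case (Suc k)
  note [measurable] = FM[OF ab]
  have iI: "integrable M (\<lambda>\<omega>. if k < F a b \<tau> \<omega> then 1 else 0 :: real)"
    by (rule bint[where B=1]) auto
  have iS: "integrable M (\<lambda>\<omega>. (\<Sum>l<k. if l < F a b \<tau> \<omega> then 1 else 0 :: real))"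
  proof (rule bint[where B="real k"])
    fix \<omega>
    have "0 \<le> (\<Sum>l<k. if l < F a b \<tau> \<omega> then 1 else 0 :: real)" by (intro sum_nonneg) auto
    moreover have "(\<Sum>l<k. if l < F a b \<tau> \<omega> then 1 else 0 :: real) \<le> (\<Sum>l<k. 1)" by (intro sum_mono) auto
    ultimately show "\<bar>\<Sum>l<k. if l < F a b \<tau> \<omega> then 1 else 0 :: real\<bar> \<le> real k" by simp
  qed simp
  have "(\<integral>\<omega>. (\<Sum>l<Suc k. if l < F a b \<tau> \<omega> then 1 else 0) \<partial>M) = 
        (\<integral>\<omega>. (\<Sum>l<k. if l < F a b \<tau> \<omega> then 1 else 0) \<partial>M) + (\<integral>\<omega>. (if k < F a b \<tau> \<omega> then 1 else 0 :: real) \<partial>M)"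
    using iI iS by (simp add: Bochner_Integration.integral_add)
  then show ?case using Pk_step[OF ab, of \<tau> k] Suc by linarith
qed

lemma Xd_Suc: assumes ab: "(a, b) \<in> pairs K" and w: "\<omega> \<in> space M"
  shows "Xd a b (Suc \<tau>) \<omega> = Pk a b \<tau> \<tau> \<omega>"
proof -
  have Fl: "F a b \<tau> \<omega> \<le> \<tau>" using F_le[OF ab w] .
  have "real (R a b \<tau> \<omega>) = (\<Sum>l<F a b \<tau> \<omega>. real (S a b \<tau> l \<omega>))" using R_def[OF ab] by simp
  then have "q * real (F a b \<tau> \<omega>) - real (R a b \<tau> \<omega>) = (\<Sum>l<F a b \<tau> \<omega>. q - real (S a b \<tau> l \<omega>))"
    by (simp add: sum_subtractf)
  also have "\<dots> = (\<Sum>l<\<tau>. if l < F a b \<tau> \<omega> then q - real (S a b \<tau> l \<omega>) else 0)"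
    using sum_if_less[OF Fl, of "\<lambda>l. q - real (S a b \<tau> l \<omega>)"] by simp
  finally have h: "q * real (F a b \<tau> \<omega>) - real (R a b \<tau> \<omega>) = (\<Sum>l<\<tau>. if l < F a b \<tau> \<omega> then q - real (S a b \<tau> l \<omega>) else 0)" .
  have n: "Nc a b (Suc \<tau>) \<omega> = Nc a b \<tau> \<omega> + F a b \<tau> \<omega>" "Sc a b (Suc \<tau>) \<omega> = Sc a b \<tau> \<omega> + R a b \<tau> \<omega>"
    by (simp_all add: Nc_def Sc_def)
  have "Xd a b (Suc \<tau>) \<omega> = Xd a b \<tau> \<omega> + (q * real (F a b \<tau> \<omega>) - real (R a b \<tau> \<omega>))"
    unfolding Xd_def n by (simp add: distrib_left)
  then show ?thesis unfolding Pk_def h .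
qed

lemma Xd_sq_step: assumes ab: "(a, b) \<in> pairs K"
  shows "(\<integral>\<omega>. (Xd a b (Suc \<tau>) \<omega>)\<^sup>2 \<partial>M) \<le> (\<integral>\<omega>. (Xd a b \<tau> \<omega>)\<^sup>2 \<partial>M) + (\<integral>\<omega>. real (F a b \<tau> \<omega>) \<partial>M)"
proof -
  have e1: "(\<integral>\<omega>. (Xd a b (Suc \<tau>) \<omega>)\<^sup>2 \<partial>M) = (\<integral>\<omega>. (Pk a b \<tau> \<tau> \<omega>)\<^sup>2 \<partial>M)"
    by (rule Bochner_Integration.integral_cong[OF refl]) (simp add: Xd_Suc[OF ab])
  have e2: "(\<integral>\<omega>. (\<Sum>l<\<tau>. if l < F a b \<tau> \<omega> then 1 else 0) \<partial>M) = (\<integral>\<omega>. real (F a b \<tau> \<omega>) \<partial>M)"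
    by (rule Bochner_Integration.integral_cong[OF refl]) (simp add: sum_if_less[OF F_le[OF ab]])
  show ?thesis using Pk_sum[OF ab, of \<tau> \<tau>] unfolding e1 e2 .
qed

lemma Xd_sq: assumes ab: "(a, b) \<in> pairs K"
  shows "(\<integral>\<omega>. (Xd a b t \<omega>)\<^sup>2 \<partial>M) \<le> real t"
proof -
  note [measurable] = FM[OF ab] NcM[OF ab]
  have iF: "integrable M (\<lambda>\<omega>. real (F a b \<tau> \<omega>))" for \<tau>
    by (rule bint[where B="real \<tau>"]) (auto simp: F_le[OF ab])
  have iN: "integrable M (\<lambda>\<omega>. real (Nc a b \<tau> \<omega>))" for \<tau>
    by (rule bint[where B="real \<tau>"]) (auto simp: Nc_le[OF ab])
  have "(\<integral>\<omega>. (Xd a b t \<omega>)\<^sup>2 \<partial>M) \<le> (\<integral>\<omega>. real (Nc a b t \<omega>) \<partial>M)"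
  proof (induction t)
    case 0 then show ?case by (simp add: Xd_def Nc_def Sc_def)
  next
    case (Suc t)
    have "(\<integral>\<omega>. real (Nc a b (Suc t) \<omega>) \<partial>M) = (\<integral>\<omega>. real (Nc a b t \<omega>) + real (F a b t \<omega>) \<partial>M)"
      by (simp add: Nc_def)
    also have "\<dots> = (\<integral>\<omega>. real (Nc a b t \<omega>) \<partial>M) + (\<integral>\<omega>. real (F a b t \<omega>) \<partial>M)"
      using iF iN by (simp add: Bochner_Integration.integral_add)
    finally show ?case using Xd_sq_step[OF ab, of t] Suc by linarith
  qed
  also have "\<dots> \<le> (\<integral>\<omega>. real t \<partial>M)"
    by (rule integral_mono[OF iN]) (auto simp: Nc_le[OF ab])
  finally show ?thesis by (simp add: P.prob_space)
qed

end

context qsw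
begin

interpretation P: prob_space M by (rule M)

lemma p_le1: "i \<in> {1..K} \<Longrightarrow> p i \<le> 1"
  using C_bern[of i 0] P.prob_le_1 by metis

lemma Yd_bound: assumes i: "i \<in> {1..K}" and w: "\<omega> \<in> space M" shows "\<bar>Yd i t \<omega>\<bar> \<le> real t"
proof -
  have "real (Gc i t \<omega>) \<le> real t" using Gc_le[OF i w] by simp
  moreover have "p i * real t \<le> real t" using p_le1[OF i] p_nonneg[OF i] by (simp add: mult_left_le_one_le mult_le_cancel_right1)
  moreover have "0 \<le> p i * real t" using p_nonneg[OF i] by simp
  ultimately show ?thesis unfolding Yd_def by auto
qed

lemma YdM: "i \<in> {1..K} \<Longrightarrow> Yd i t \<in> borel_measurable (Gm (Ipast t))"
proof -
  assume i: "i \<in> {1..K}"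
  have [measurable]: "(\<lambda>\<omega>. real (Gc i t \<omega>)) \<in> borel_measurable (Gm (Ipast t))"
    by (rule real_meas[OF Gc_meas[OF i order.refl order.refl]])
  have eq: "Yd i t = (\<lambda>\<omega>. p i * real t - real (Gc i t \<omega>))" by (auto simp: Yd_def)
  show ?thesis unfolding eq by measurable
qed

lemma Yd_sq: assumes i: "i \<in> {1..K}" shows "(\<integral>\<omega>. (Yd i t \<omega>)\<^sup>2 \<partial>M) \<le> real t"
proof (induction t)
  case 0 then show ?case by (simp add: Yd_def Gc_def)
next
  case (Suc t)
  define D where "D = (\<lambda>\<omega>. p i - real (C i t \<omega>))"
  note [measurable] = meas_M[OF YdM[OF i]] CM[OF i]
  have [measurable]: "D \<in> borel_measurable M" unfolding D_def by measurable
  have Cb: "C i t \<omega> \<le> 1" if "\<omega> \<in> space M" for \<omega> using C_bern[OF i] that by auto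
  have Db: "\<bar>D \<omega>\<bar> \<le> 1" if "\<omega> \<in> space M" for \<omega>
    using Cb[OF that] p_le1[OF i] p_nonneg[OF i] by (cases "C i t \<omega>") (auto simp: D_def)
  have iY: "integrable M (Yd i t)" by (rule bint[where B="real t"]) (auto simp: Yd_bound[OF i])
  have iYC: "integrable M (\<lambda>\<omega>. Yd i t \<omega> * real (C i t \<omega>))"
  proof (rule bint[where B="real t"])
    fix \<omega> assume w: "\<omega> \<in> space M"
    have "\<bar>Yd i t \<omega>\<bar> * real (C i t \<omega>) \<le> real t * 1"
      by (rule mult_mono) (use Yd_bound[OF i w] Cb[OF w] in auto)
    then show "\<bar>Yd i t \<omega> * real (C i t \<omega>)\<bar> \<le> real t" by (simp add: abs_mult)
  qed simp
  have iY2: "integrable M (\<lambda>\<omega>. (Yd i t \<omega>)\<^sup>2)"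
  proof (rule bint[where B="(real t)^2"])
    fix \<omega> assume w: "\<omega> \<in> space M"
    have "\<bar>Yd i t \<omega>\<bar>^2 \<le> (real t)^2" by (rule power_mono[OF Yd_bound[OF i w]]) auto
    then show "\<bar>(Yd i t \<omega>)\<^sup>2\<bar> \<le> (real t)^2" by simp
  qed simp
  have iYD: "integrable M (\<lambda>\<omega>. Yd i t \<omega> * D \<omega>)"
  proof (rule bint[where B="real t"])
    fix \<omega> assume w: "\<omega> \<in> space M"
    have "\<bar>Yd i t \<omega>\<bar> * \<bar>D \<omega>\<bar> \<le> real t * 1" by (rule mult_mono[OF Yd_bound[OF i w] Db[OF w]]) auto
    then show "\<bar>Yd i t \<omega> * D \<omega>\<bar> \<le> real t" by (simp add: abs_mult)
  qed simp
  have iD2: "integrable M (\<lambda>\<omega>. (D \<omega>)\<^sup>2)"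
    by (rule bint[where B=1]) (use Db in \<open>auto simp: abs_square_le_1\<close>)
  have YD: "(\<lambda>\<omega>. Yd i t \<omega> * D \<omega>) = (\<lambda>\<omega>. p i * Yd i t \<omega> - Yd i t \<omega> * real (C i t \<omega>))"
    by (auto simp: D_def algebra_simps)
  have z: "(\<integral>\<omega>. Yd i t \<omega> * D \<omega> \<partial>M) = 0"
    unfolding YD using iY iYC gen_ind[OF i YdM[OF i] Yd_bound[OF i]]
    by (simp add: Bochner_Integration.integral_diff)
  have sq: "(\<lambda>\<omega>. (Yd i (Suc t) \<omega>)\<^sup>2) = (\<lambda>\<omega>. (Yd i t \<omega>)\<^sup>2 + 2 * (Yd i t \<omega> * D \<omega>) + (D \<omega>)\<^sup>2)"
    by (auto simp: Yd_def D_def Gc_def power2_eq_square algebra_simps)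
  have "(\<integral>\<omega>. (Yd i (Suc t) \<omega>)\<^sup>2 \<partial>M) = (\<integral>\<omega>. (Yd i t \<omega>)\<^sup>2 \<partial>M) + 2 * (\<integral>\<omega>. Yd i t \<omega> * D \<omega> \<partial>M) + (\<integral>\<omega>. (D \<omega>)\<^sup>2 \<partial>M)"
    unfolding sq using iY2 iYD iD2 by (simp add: Bochner_Integration.integral_add)
  also have "(\<integral>\<omega>. (D \<omega>)\<^sup>2 \<partial>M) \<le> (\<integral>\<omega>. 1 \<partial>M)"
    by (rule integral_mono[OF iD2]) (use Db in \<open>auto simp: abs_square_le_1\<close>)
  finally show ?case using z Suc by (simp add: P.prob_space)
qed


definition c1 :: real where
  "c1 = (SOME c1. \<forall>t \<ge> 1. \<forall>(i, j) \<in> pairs K.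
        (\<integral>\<^sup>+ \<omega>. indicator {\<omega> \<in> space M. \<exists>(i', j') \<in> pairs K.
                 \<bar>(\<Sum>\<tau> < t. real (A i' j' \<tau> \<omega>)) / real t - lam i' j'\<bar> > dl} \<omega>
              * ennreal (\<Sum>\<tau> < t. real (A i j \<tau> \<omega>)) \<partial>M) \<le> ennreal c1)"

lemma c1_prop: "\<forall>t \<ge> 1. \<forall>(i, j) \<in> pairs K.
        (\<integral>\<^sup>+ \<omega>. indicator {\<omega> \<in> space M. \<exists>(i', j') \<in> pairs K.
                 \<bar>(\<Sum>\<tau> < t. real (A i' j' \<tau> \<omega>)) / real t - lam i' j'\<bar> > dl} \<omega>
              * ennreal (\<Sum>\<tau> < t. real (A i j \<tau> \<omega>)) \<partial>M) \<le> ennreal c1"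
  unfolding c1_def by (rule someI_ex[OF assm1[OF dl_pos]])

definition c1p :: real where "c1p = max c1 0"

lemma Zp_nonneg: "Zp a b t \<omega> \<ge> 0" unfolding Zp_def by simp

lemma ZpM: "(a, b) \<in> pairs K \<Longrightarrow> Zp a b t \<in> borel_measurable M"
proof -
  assume ab: "(a, b) \<in> pairs K"
  note [measurable] = ArrM[OF ab]
  have eq: "Zp a b t = (\<lambda>\<omega>. max 0 (Arr a b t \<omega> - (lam a b + dl) * real t))" by (auto simp: Zp_def)
  show ?thesis unfolding eq by measurable
qed

lemma Zp_int: assumes ab: "(a, b) \<in> pairs K" and t: "t \<ge> 1"
  shows "integrable M (Zp a b t) \<and> (\<integral>\<omega>. Zp a b t \<omega> \<partial>M) \<le> c1p"
proof -
  let ?B = "{\<omega> \<in> space M. \<exists>(i', j') \<in> pairs K. \<bar>(\<Sum>\<tau> < t. real (A i' j' \<tau> \<omega>)) / real t - lam i' j'\<bar> > dl}"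
  have le: "ennreal (Zp a b t \<omega>) \<le> indicator ?B \<omega> * ennreal (\<Sum>\<tau> < t. real (A a b \<tau> \<omega>))" if w: "\<omega> \<in> space M" for \<omega>
  proof (cases "Zp a b t \<omega> = 0")
    case True then show ?thesis by simp
  next
    case False
    then have gt: "Arr a b t \<omega> > (lam a b + dl) * real t" unfolding Zp_def by (auto simp: max_def split: if_splits)
    have tp: "real t > 0" using t by simp
    have "Arr a b t \<omega> / real t > lam a b + dl" using gt tp by (simp add: field_simps)
    then have "\<bar>(\<Sum>\<tau> < t. real (A a b \<tau> \<omega>)) / real t - lam a b\<bar> > dl" unfolding Arr_def by linarith
    then have "\<omega> \<in> ?B" using w ab by blast
    moreover have "Zp a b t \<omega> \<le> Arr a b t \<omega>"
      using lam_nonneg[OF ab] dl_pos gt unfolding Zp_def by (simp add: max_def)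
    ultimately show ?thesis unfolding Arr_def by (simp add: ennreal_leI)
  qed
  have "(\<integral>\<^sup>+\<omega>. ennreal (Zp a b t \<omega>) \<partial>M) \<le> (\<integral>\<^sup>+\<omega>. indicator ?B \<omega> * ennreal (\<Sum>\<tau> < t. real (A a b \<tau> \<omega>)) \<partial>M)"
    by (rule nn_integral_mono) (rule le)
  also have "\<dots> \<le> ennreal c1" using c1_prop t ab by blast
  also have "\<dots> \<le> ennreal c1p" unfolding c1p_def by (simp add: ennreal_leI)
  finally have nn: "(\<integral>\<^sup>+\<omega>. ennreal (Zp a b t \<omega>) \<partial>M) \<le> ennreal c1p" .
  have [measurable]: "Zp a b t \<in> borel_measurable M" using ZpM[OF ab] .
  have int: "integrable M (Zp a b t)"
  proof (rule integrableI_bounded)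
    have "(\<integral>\<^sup>+\<omega>. ennreal (norm (Zp a b t \<omega>)) \<partial>M) = (\<integral>\<^sup>+\<omega>. ennreal (Zp a b t \<omega>) \<partial>M)"
      using Zp_nonneg by simp
    then show "(\<integral>\<^sup>+\<omega>. ennreal (norm (Zp a b t \<omega>)) \<partial>M) < \<infinity>" using nn
      by (simp add: order_le_less_trans)
  qed simp
  have "(\<integral>\<omega>. Zp a b t \<omega> \<partial>M) = enn2real (\<integral>\<^sup>+\<omega>. ennreal (Zp a b t \<omega>) \<partial>M)"
    by (rule integral_eq_nn_integral) (auto simp: Zp_nonneg)
  also have "\<dots> \<le> c1p" using nn unfolding c1p_def by (simp add: enn2real_leI)
  finally show ?thesis using int by simp
qed

lemma Arr_int: assumes ab: "(a, b) \<in> pairs K" and t: "t \<ge> 1"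
  shows "integrable M (Arr a b t) \<and> (\<integral>\<omega>. Arr a b t \<omega> \<partial>M) \<le> c1p + (lam a b + dl) * real t"
proof -
  have le: "Arr a b t \<omega> \<le> Zp a b t \<omega> + (lam a b + dl) * real t" for \<omega> unfolding Zp_def by simp
  have iZ: "integrable M (Zp a b t)" and bZ: "(\<integral>\<omega>. Zp a b t \<omega> \<partial>M) \<le> c1p" using Zp_int[OF ab t] by auto
  have iR: "integrable M (\<lambda>\<omega>. Zp a b t \<omega> + (lam a b + dl) * real t)" using iZ by simp
  have nonneg: "Arr a b t \<omega> \<ge> 0" for \<omega> unfolding Arr_def by (simp add: sum_nonneg)
  have int: "integrable M (Arr a b t)"
    by (rule Bochner_Integration.integrable_bound[OF iR ArrM[OF ab]])
       (use le nonneg lam_nonneg[OF ab] dl_pos t in \<open>auto intro!: AE_I2 simp: Zp_nonneg\<close>)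
  have "(\<integral>\<omega>. Arr a b t \<omega> \<partial>M) \<le> (\<integral>\<omega>. Zp a b t \<omega> + (lam a b + dl) * real t \<partial>M)"
    by (rule integral_mono[OF int iR]) (rule le)
  also have "\<dots> = (\<integral>\<omega>. Zp a b t \<omega> \<partial>M) + (lam a b + dl) * real t"
    using iZ by (simp add: P.prob_space)
  finally show ?thesis using int bZ by simp
qed

lemma pos_part_sq: "(a::real) > 0 \<Longrightarrow> max 0 (x - a) \<le> x\<^sup>2 / (4 * a)"
proof -
  assume a: "a > 0"
  have "4 * a * (x - a) \<le> x\<^sup>2" using sum_power2_ge_zero[of "x - 2*a" 0]
    by (simp add: power2_eq_square algebra_simps)
  then have "x - a \<le> x\<^sup>2 / (4 * a)" using a by (simp add: field_simps)
  moreover have "0 \<le> x\<^sup>2 / (4 * a)" using a by simp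
  ultimately show ?thesis by simp
qed


lemma Xpos_int: assumes ab: "(a, b) \<in> pairs K" and t: "t \<ge> 1"
  shows "integrable M (\<lambda>\<omega>. max 0 (Xd a b t \<omega> - dl * real t)) \<and>
         (\<integral>\<omega>. max 0 (Xd a b t \<omega> - dl * real t) \<partial>M) \<le> 1 / (4 * dl)"
proof -
  note [measurable] = XdM[OF ab]
  have a: "dl * real t > 0" using dl_pos t by simp
  have i1: "integrable M (\<lambda>\<omega>. max 0 (Xd a b t \<omega> - dl * real t))"
  proof (rule bint[where B="real t"])
    fix \<omega> assume w: "\<omega> \<in> space M"
    show "\<bar>max 0 (Xd a b t \<omega> - dl * real t)\<bar> \<le> real t" using Xd_bound[OF ab w, of t] a by auto
  qed measurable
  have i2: "integrable M (\<lambda>\<omega>. (Xd a b t \<omega>)\<^sup>2)"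
  proof (rule bint[where B="(real t)^2"])
    fix \<omega> assume w: "\<omega> \<in> space M"
    have "\<bar>Xd a b t \<omega>\<bar>^2 \<le> (real t)^2" by (rule power_mono[OF Xd_bound[OF ab w]]) auto
    then show "\<bar>(Xd a b t \<omega>)\<^sup>2\<bar> \<le> (real t)^2" by simp
  qed measurable
  have "(\<integral>\<omega>. max 0 (Xd a b t \<omega> - dl * real t) \<partial>M) \<le> (\<integral>\<omega>. (Xd a b t \<omega>)\<^sup>2 / (4 * (dl * real t)) \<partial>M)"
    by (rule integral_mono[OF i1]) (use i2 pos_part_sq[OF a] in auto)
  also have "\<dots> = (\<integral>\<omega>. (Xd a b t \<omega>)\<^sup>2 \<partial>M) / (4 * (dl * real t))" by simp
  also have "\<dots> \<le> real t / (4 * (dl * real t))"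
    using Xd_sq[OF ab, of t] a by (intro divide_right_mono) auto
  also have "\<dots> = 1 / (4 * dl)" using t by simp
  finally show ?thesis using i1 by simp
qed

lemma Ypos_int: assumes i: "i \<in> {1..K}"
  shows "integrable M (\<lambda>\<omega>. max 0 (q * Yd i s \<omega> - dl * real s)) \<and>
         (\<integral>\<omega>. max 0 (q * Yd i s \<omega> - dl * real s) \<partial>M) \<le> 1 / (4 * dl)"
proof (cases "s = 0")
  case True
  have "(\<lambda>\<omega>. max 0 (q * Yd i s \<omega> - dl * real s)) = (\<lambda>_. 0)" using True by (auto simp: Yd_def Gc_def)
  then show ?thesis using dl_pos by simp
next
  case False
  then have t: "s \<ge> 1" by simp
  note [measurable] = meas_M[OF YdM[OF i]]
  have a: "dl * real s > 0" using dl_pos t by simp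
  have qY: "\<bar>q * Yd i s \<omega>\<bar> \<le> real s" if w: "\<omega> \<in> space M" for \<omega>
  proof -
    have "\<bar>q\<bar> * \<bar>Yd i s \<omega>\<bar> \<le> 1 * real s" by (rule mult_mono) (use q Yd_bound[OF i w] in auto)
    then show ?thesis by (simp add: abs_mult)
  qed
  have i1: "integrable M (\<lambda>\<omega>. max 0 (q * Yd i s \<omega> - dl * real s))"
  proof (rule bint[where B="real s"])
    fix \<omega> assume w: "\<omega> \<in> space M"
    show "\<bar>max 0 (q * Yd i s \<omega> - dl * real s)\<bar> \<le> real s" using qY[OF w] a by auto
  qed measurable
  have i2: "integrable M (\<lambda>\<omega>. (Yd i s \<omega>)\<^sup>2)"
  proof (rule bint[where B="(real s)^2"])
    fix \<omega> assume w: "\<omega> \<in> space M"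
    have "\<bar>Yd i s \<omega>\<bar>^2 \<le> (real s)^2" by (rule power_mono[OF Yd_bound[OF i w]]) auto
    then show "\<bar>(Yd i s \<omega>)\<^sup>2\<bar> \<le> (real s)^2" by simp
  qed measurable
  have "(\<integral>\<omega>. max 0 (q * Yd i s \<omega> - dl * real s) \<partial>M) \<le> (\<integral>\<omega>. (Yd i s \<omega>)\<^sup>2 / (4 * (dl * real s)) \<partial>M)"
  proof (rule integral_mono[OF i1])
    show "integrable M (\<lambda>\<omega>. (Yd i s \<omega>)\<^sup>2 / (4 * (dl * real s)))" using i2 by simp
    fix \<omega> assume w: "\<omega> \<in> space M"
    have "(q * Yd i s \<omega>)\<^sup>2 \<le> (Yd i s \<omega>)\<^sup>2"
    proof -
      have "(q * Yd i s \<omega>)\<^sup>2 = q\<^sup>2 * (Yd i s \<omega>)\<^sup>2" by (simp add: power_mult_distrib)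
      also have "\<dots> \<le> 1 * (Yd i s \<omega>)\<^sup>2" using q by (intro mult_right_mono) (auto simp: power_le_one)
      finally show ?thesis by simp
    qed
    then have "(q * Yd i s \<omega>)\<^sup>2 / (4 * (dl * real s)) \<le> (Yd i s \<omega>)\<^sup>2 / (4 * (dl * real s))"
      using a by (intro divide_right_mono) auto
    then show "max 0 (q * Yd i s \<omega> - dl * real s) \<le> (Yd i s \<omega>)\<^sup>2 / (4 * (dl * real s))"
      using pos_part_sq[OF a, of "q * Yd i s \<omega>"] by linarith
  qed
  also have "\<dots> = (\<integral>\<omega>. (Yd i s \<omega>)\<^sup>2 \<partial>M) / (4 * (dl * real s))" by simp
  also have "\<dots> \<le> real s / (4 * (dl * real s))"
    using Yd_sq[OF i, of s] a by (intro divide_right_mono) auto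
  also have "\<dots> = 1 / (4 * dl)" using t by simp
  finally show ?thesis using i1 by simp
qed

definition B0 :: real where "B0 = q + real K * (c1p + 1 / (4 * dl)) + 1 / (4 * dl)"

lemma Psi_int: assumes i: "i \<in> {1..K}"
  shows "integrable M (Psi i s) \<and> (\<integral>\<omega>. Psi i s \<omega> \<partial>M) \<le> B0"
proof -
  let ?I = "{1..K} - {i}"
  have pk: "k \<in> ?I \<Longrightarrow> (i, k) \<in> pairs K" for k using i by (auto simp: pairs_def)
  define g where "g k \<omega> = Zp i k (Suc s) \<omega> + max 0 (Xd i k (Suc s) \<omega> - dl * real (Suc s))" for k \<omega>
  define h where "h \<omega> = max 0 (q * Yd i s \<omega> - dl * real s)" for \<omega>
  have ig: "integrable M (g k) \<and> (\<integral>\<omega>. g k \<omega> \<partial>M) \<le> c1p + 1 / (4 * dl)" if k: "k \<in> ?I" for k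
  proof -
    have z: "integrable M (Zp i k (Suc s))" "(\<integral>\<omega>. Zp i k (Suc s) \<omega> \<partial>M) \<le> c1p"
      using Zp_int[OF pk[OF k], of "Suc s"] by auto
    have x: "integrable M (\<lambda>\<omega>. max 0 (Xd i k (Suc s) \<omega> - dl * real (Suc s)))"
      "(\<integral>\<omega>. max 0 (Xd i k (Suc s) \<omega> - dl * real (Suc s)) \<partial>M) \<le> 1 / (4 * dl)"
      using Xpos_int[OF pk[OF k], of "Suc s"] by auto
    have "(\<integral>\<omega>. g k \<omega> \<partial>M) = (\<integral>\<omega>. Zp i k (Suc s) \<omega> \<partial>M) + (\<integral>\<omega>. max 0 (Xd i k (Suc s) \<omega> - dl * real (Suc s)) \<partial>M)"
      unfolding g_def using z x by (simp add: Bochner_Integration.integral_add)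
    then show ?thesis using z x unfolding g_def by simp
  qed
  have ih: "integrable M h" "(\<integral>\<omega>. h \<omega> \<partial>M) \<le> 1 / (4 * dl)" using Ypos_int[OF i, of s] unfolding h_def by auto
  have eq: "Psi i s = (\<lambda>\<omega>. q * p i + (\<Sum>k\<in>?I. g k \<omega>) + h \<omega>)" unfolding Psi_def g_def h_def by auto
  have isum: "integrable M (\<lambda>\<omega>. \<Sum>k\<in>?I. g k \<omega>)" using ig by (intro Bochner_Integration.integrable_sum) auto
  have "(\<integral>\<omega>. (\<Sum>k\<in>?I. g k \<omega>) \<partial>M) = (\<Sum>k\<in>?I. \<integral>\<omega>. g k \<omega> \<partial>M)"
    using ig by (intro Bochner_Integration.integral_sum) auto
  also have "\<dots> \<le> (\<Sum>k\<in>?I. c1p + 1 / (4 * dl))" using ig by (intro sum_mono) auto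
  also have "\<dots> = real (card ?I) * (c1p + 1 / (4 * dl))" by simp
  also have "\<dots> \<le> real K * (c1p + 1 / (4 * dl))"
  proof (rule mult_right_mono)
    have "card ?I \<le> card {1..K}" by (rule card_mono) auto
    then show "real (card ?I) \<le> real K" by simp
    show "0 \<le> c1p + 1 / (4 * dl)" using dl_pos by (simp add: c1p_def)
  qed
  finally have bs: "(\<integral>\<omega>. (\<Sum>k\<in>?I. g k \<omega>) \<partial>M) \<le> real K * (c1p + 1 / (4 * dl))" .
  have int: "integrable M (Psi i s)" unfolding eq using isum ih by simp
  have "(\<integral>\<omega>. Psi i s \<omega> \<partial>M) = q * p i + (\<integral>\<omega>. (\<Sum>k\<in>?I. g k \<omega>) \<partial>M) + (\<integral>\<omega>. h \<omega> \<partial>M)"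
    unfolding eq using isum ih by (simp add: Bochner_Integration.integral_add P.prob_space)
  also have "\<dots> \<le> B0" unfolding B0_def using bs ih p_le1[OF i] q
    by (smt (verit) mult_left_le)
  finally show ?thesis using int by simp
qed

end

context qsw
begin

interpretation P: prob_space M by (rule M)

lemma pred_le_nat[measurable (raw)]:
  assumes f: "f \<in> measurable N (count_space UNIV)" and g: "g \<in> measurable N (count_space UNIV)"
  shows "Measurable.pred N (\<lambda>\<omega>. (f \<omega>::nat) \<le> g \<omega>)"
proof -
  have "(\<lambda>\<omega>. (\<lambda>n \<omega>. n \<le> g \<omega>) (f \<omega>) \<omega>) \<in> measurable N (count_space UNIV)"
    by (rule measurable_compose_countable'[where I=UNIV]) (use f g in auto)
  then show ?thesis by (simp add: pred_def measurable_count_space_eq2)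
qed

lemma U_le_Arr: "(i, j) \<in> pairs K \<Longrightarrow> \<omega> \<in> space M \<Longrightarrow> real (U i j t \<omega>) \<le> Arr i j t \<omega>"
  using arg_cong[OF U_acc[of i j \<omega> t], of real] unfolding Arr_def by simp

lemma U_int: assumes ij: "(i, j) \<in> pairs K" shows "integrable M (\<lambda>\<omega>. real (U i j t \<omega>))"
proof (cases "t = 0")
  case True then show ?thesis using init by simp
next
  case False
  have iA: "integrable M (Arr i j t)" using Arr_int[OF ij] False by simp
  show ?thesis
    by (rule Bochner_Integration.integrable_bound[OF iA real_meas[OF UM[OF ij]]])
       (use U_le_Arr[OF ij] in \<open>auto intro!: AE_I2 simp: Arr_def sum_nonneg\<close>)
qed

lemma A_int: assumes ij: "(i, j) \<in> pairs K" shows "integrable M (\<lambda>\<omega>. real (A i j s \<omega>))"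
proof -
  have iA: "integrable M (Arr i j (Suc s))" using Arr_int[OF ij] by simp
  show ?thesis
    by (rule Bochner_Integration.integrable_bound[OF iA real_meas[OF AM[OF ij]]])
       (auto intro!: AE_I2 simp: Arr_def sum_nonneg)
qed

lemma full_term:
  assumes ij: "(i, j) \<in> pairs K"
  shows "integrable M (\<lambda>\<omega>. if U i j s \<omega> \<le> F i j s \<omega> then real (F i j s \<omega>) - real (R i j s \<omega>) else 0) \<and>
    (\<integral>\<omega>. (if U i j s \<omega> \<le> F i j s \<omega> then real (F i j s \<omega>) - real (R i j s \<omega>) else 0) \<partial>M)
      \<le> (1 - q) * (\<integral>\<omega>. real (U i j s \<omega>) \<partial>M)"
proof -
  note [measurable] = UM[OF ij] FM[OF ij] RM[OF ij]
  define Wk where "Wk k \<omega> = (if U i j s \<omega> \<le> F i j s \<omega> \<and> k < F i j s \<omega> then 1 else 0 :: real)" for k \<omega>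
  have WG: "Wk k \<in> borel_measurable (Gm (Icoin i j s k))" for k
  proof -
    have [measurable]: "U i j s \<in> measurable (Gm (Icoin i j s k)) (count_space UNIV)"
      by (rule U_meas[OF ij Ipast_Icoin order.refl])
    have [measurable]: "F i j s \<in> measurable (Gm (Icoin i j s k)) (count_space UNIV)"
      by (rule F_meas'[OF ij order.refl Ipast_Icoin])
    have eq: "Wk k = (\<lambda>\<omega>. (\<lambda>n \<omega>. if U i j s \<omega> \<le> n \<and> k < n then 1 else 0 :: real) (F i j s \<omega>) \<omega>)"
      by (auto simp: Wk_def)
    show ?thesis unfolding eq
      by (rule measurable_compose_countable'[where I=UNIV]) auto
  qed
  have Wb: "\<bar>Wk k \<omega>\<bar> \<le> 1" for k \<omega> by (simp add: Wk_def)
  have [measurable]: "Wk k \<in> borel_measurable M" for k using meas_M[OF WG] .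
  note [measurable] = real_meas[OF SM[OF ij]]
  have Sb: "S i j s k \<omega> \<le> 1" if "\<omega> \<in> space M" for k \<omega> using S_bern[OF ij] that by auto
  have iWS: "integrable M (\<lambda>\<omega>. Wk k \<omega> * real (S i j s k \<omega>))" for k
  proof (rule bint[where B=1])
    show "(\<lambda>\<omega>. Wk k \<omega> * real (S i j s k \<omega>)) \<in> borel_measurable M" by measurable
    fix \<omega> assume "\<omega> \<in> space M"
    then show "\<bar>Wk k \<omega> * real (S i j s k \<omega>)\<bar> \<le> 1" using Sb by (auto simp: Wk_def)
  qed
  have iW: "integrable M (Wk k)" for k by (rule bint[where B=1]) (auto simp: Wb)
  have iFf: "integrable M (\<lambda>\<omega>. if U i j s \<omega> \<le> F i j s \<omega> then real (F i j s \<omega>) else 0)"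
    by (rule bint[where B="real s"]) (auto simp: F_le[OF ij])
  have iRf: "integrable M (\<lambda>\<omega>. if U i j s \<omega> \<le> F i j s \<omega> then real (R i j s \<omega>) else 0)"
    by (rule bint[where B="real s"]) (auto intro: order.trans[OF R_le_F[OF ij] F_le[OF ij]])
  have eR: "(if U i j s \<omega> \<le> F i j s \<omega> then real (R i j s \<omega>) else 0) = (\<Sum>k<s. Wk k \<omega> * real (S i j s k \<omega>))"
    if w: "\<omega> \<in> space M" for \<omega>
  proof -
    have "(\<Sum>k<s. Wk k \<omega> * real (S i j s k \<omega>)) =
       (if U i j s \<omega> \<le> F i j s \<omega> then (\<Sum>k<s. if k < F i j s \<omega> then real (S i j s k \<omega>) else 0) else 0)"
      by (auto simp: Wk_def intro: sum.cong)
    also have "(\<Sum>k<s. if k < F i j s \<omega> then real (S i j s k \<omega>) else 0) = (\<Sum>k<F i j s \<omega>. real (S i j s k \<omega>))"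
      using sum_if_less[OF F_le[OF ij w, of s], of "\<lambda>k. real (S i j s k \<omega>)"] by simp
    also have "\<dots> = real (R i j s \<omega>)" using R_def[OF ij] by simp
    finally show ?thesis by simp
  qed
  have eF: "(if U i j s \<omega> \<le> F i j s \<omega> then real (F i j s \<omega>) else 0) = (\<Sum>k<s. Wk k \<omega>)"
    if w: "\<omega> \<in> space M" for \<omega>
  proof -
    have "(\<Sum>k<s. Wk k \<omega>) = (if U i j s \<omega> \<le> F i j s \<omega> then (\<Sum>k<s. if k < F i j s \<omega> then 1 else 0) else 0)"
      by (auto simp: Wk_def intro: sum.cong)
    also have "(\<Sum>k<s. if k < F i j s \<omega> then 1 else 0 :: real) = (\<Sum>k<F i j s \<omega>. 1)"
      using sum_if_less[OF F_le[OF ij w, of s], of "\<lambda>k. 1::real"] by simp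
    finally show ?thesis by simp
  qed
  have "(\<integral>\<omega>. (if U i j s \<omega> \<le> F i j s \<omega> then real (R i j s \<omega>) else 0) \<partial>M) = (\<integral>\<omega>. (\<Sum>k<s. Wk k \<omega> * real (S i j s k \<omega>)) \<partial>M)"
    by (rule Bochner_Integration.integral_cong[OF refl eR])
  also have "\<dots> = (\<Sum>k<s. \<integral>\<omega>. Wk k \<omega> * real (S i j s k \<omega>) \<partial>M)"
    using iWS by (intro Bochner_Integration.integral_sum) auto
  also have "\<dots> = (\<Sum>k<s. q * (\<integral>\<omega>. Wk k \<omega> \<partial>M))"
    by (intro sum.cong refl coin_ind[OF ij WG, of _ 1]) (simp add: Wb)
  also have "\<dots> = q * (\<integral>\<omega>. (\<Sum>k<s. Wk k \<omega>) \<partial>M)"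
    using iW by (simp add: Bochner_Integration.integral_sum sum_distrib_left)
  also have "(\<integral>\<omega>. (\<Sum>k<s. Wk k \<omega>) \<partial>M) = (\<integral>\<omega>. (if U i j s \<omega> \<le> F i j s \<omega> then real (F i j s \<omega>) else 0) \<partial>M)"
    by (rule Bochner_Integration.integral_cong[OF refl eF[symmetric]])
  finally have eqR: "(\<integral>\<omega>. (if U i j s \<omega> \<le> F i j s \<omega> then real (R i j s \<omega>) else 0) \<partial>M)
      = q * (\<integral>\<omega>. (if U i j s \<omega> \<le> F i j s \<omega> then real (F i j s \<omega>) else 0) \<partial>M)" .
  have split: "(\<lambda>\<omega>. if U i j s \<omega> \<le> F i j s \<omega> then real (F i j s \<omega>) - real (R i j s \<omega>) else 0) =
      (\<lambda>\<omega>. (if U i j s \<omega> \<le> F i j s \<omega> then real (F i j s \<omega>) else 0) - (if U i j s \<omega> \<le> F i j s \<omega> then real (R i j s \<omega>) else 0))"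
    by auto
  have int: "integrable M (\<lambda>\<omega>. if U i j s \<omega> \<le> F i j s \<omega> then real (F i j s \<omega>) - real (R i j s \<omega>) else 0)"
    unfolding split using iFf iRf by simp
  have "(\<integral>\<omega>. (if U i j s \<omega> \<le> F i j s \<omega> then real (F i j s \<omega>) - real (R i j s \<omega>) else 0) \<partial>M)
     = (1 - q) * (\<integral>\<omega>. (if U i j s \<omega> \<le> F i j s \<omega> then real (F i j s \<omega>) else 0) \<partial>M)"
    unfolding split using iFf iRf eqR by (simp add: Bochner_Integration.integral_diff algebra_simps)
  also have "\<dots> \<le> (1 - q) * (\<integral>\<omega>. real (U i j s \<omega>) \<partial>M)"
  proof (rule mult_left_mono)
    show "0 \<le> 1 - q" using q by simp
    show "(\<integral>\<omega>. (if U i j s \<omega> \<le> F i j s \<omega> then real (F i j s \<omega>) else 0) \<partial>M) \<le> (\<integral>\<omega>. real (U i j s \<omega>) \<partial>M)"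
      by (rule integral_mono[OF iFf U_int[OF ij]]) (use od_dem[OF ij] in auto)
  qed
  finally show ?thesis using int by simp
qed

end

context qsw
begin

interpretation P: prob_space M by (rule M)

lemma u_step: assumes ij: "(i, j) \<in> pairs K"
  shows "(\<integral>\<omega>. real (U i j (Suc s) \<omega>) \<partial>M) \<le> 2 * B0 + (1 - q) * (\<integral>\<omega>. real (U i j s \<omega>) \<partial>M) + (\<integral>\<omega>. real (A i j s \<omega>) \<partial>M)"
proof -
  have i: "i \<in> {1..K}" and j: "j \<in> {1..K}" using ij by (auto simp: pairs_def)
  define H where "H \<omega> = (if U i j s \<omega> \<le> F i j s \<omega> then real (F i j s \<omega>) - real (R i j s \<omega>) else 0)" for \<omega>
  have pi: "integrable M (Psi i s)" "(\<integral>\<omega>. Psi i s \<omega> \<partial>M) \<le> B0" using Psi_int[OF i] by auto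
  have pj: "integrable M (Psi j s)" "(\<integral>\<omega>. Psi j s \<omega> \<partial>M) \<le> B0" using Psi_int[OF j] by auto
  have h: "integrable M H" "(\<integral>\<omega>. H \<omega> \<partial>M) \<le> (1 - q) * (\<integral>\<omega>. real (U i j s \<omega>) \<partial>M)"
    using full_term[OF ij, of s] unfolding H_def by auto
  have a: "integrable M (\<lambda>\<omega>. real (A i j s \<omega>))" using A_int[OF ij] .
  have "(\<integral>\<omega>. real (U i j (Suc s) \<omega>) \<partial>M) \<le> (\<integral>\<omega>. Psi i s \<omega> + Psi j s \<omega> + H \<omega> + real (A i j s \<omega>) \<partial>M)"
  proof (rule integral_mono[OF U_int[OF ij]])
    show "integrable M (\<lambda>\<omega>. Psi i s \<omega> + Psi j s \<omega> + H \<omega> + real (A i j s \<omega>))" using pi pj h a by simp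
    fix \<omega> assume "\<omega> \<in> space M"
    then show "real (U i j (Suc s) \<omega>) \<le> Psi i s \<omega> + Psi j s \<omega> + H \<omega> + real (A i j s \<omega>)"
      using U_main[OF ij] unfolding H_def by blast
  qed
  also have "\<dots> = (\<integral>\<omega>. Psi i s \<omega> \<partial>M) + (\<integral>\<omega>. Psi j s \<omega> \<partial>M) + (\<integral>\<omega>. H \<omega> \<partial>M) + (\<integral>\<omega>. real (A i j s \<omega>) \<partial>M)"
    using pi pj h a by (simp add: Bochner_Integration.integral_add)
  finally show ?thesis using pi pj h by linarith
qed

lemma T_bound: assumes ij: "(i, j) \<in> pairs K" and t: "t \<ge> 1"
  shows "q * (\<Sum>s<t. \<integral>\<omega>. real (U i j s \<omega>) \<partial>M) \<le> (2 * B0 + lam i j + dl + c1p) * real t"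
proof -
  define u where "u s = (\<integral>\<omega>. real (U i j s \<omega>) \<partial>M)" for s
  define a where "a s = (\<integral>\<omega>. real (A i j s \<omega>) \<partial>M)" for s
  have u0: "u 0 = 0" using init by (simp add: u_def)
  have un: "u s \<ge> 0" for s unfolding u_def by (rule integral_nonneg_AE) auto
  have sa: "(\<Sum>s<t. a s) \<le> c1p + (lam i j + dl) * real t"
  proof -
    have "(\<Sum>s<t. a s) = (\<integral>\<omega>. Arr i j t \<omega> \<partial>M)"
      unfolding a_def Arr_def using A_int[OF ij] by (simp add: Bochner_Integration.integral_sum)
    then show ?thesis using Arr_int[OF ij t] by simp
  qed
  have "(\<Sum>s<t. u (Suc s)) \<le> (\<Sum>s<t. 2 * B0 + (1 - q) * u s + a s)"
    by (intro sum_mono) (use u_step[OF ij] in \<open>auto simp: u_def a_def\<close>)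
  also have "\<dots> = 2 * B0 * real t + (1 - q) * (\<Sum>s<t. u s) + (\<Sum>s<t. a s)"
    by (simp add: sum.distrib sum_distrib_left)
  finally have r: "(\<Sum>s<t. u (Suc s)) \<le> 2 * B0 * real t + (1 - q) * (\<Sum>s<t. u s) + (\<Sum>s<t. a s)" .
  have "(\<Sum>s<t. u s) \<le> (\<Sum>s<Suc t. u s)" using un by simp
  also have "\<dots> = (\<Sum>s<t. u (Suc s))" unfolding sum.lessThan_Suc_shift using u0 by simp
  finally have "(\<Sum>s<t. u s) \<le> 2 * B0 * real t + (1 - q) * (\<Sum>s<t. u s) + c1p + (lam i j + dl) * real t"
    using r sa by linarith
  then have "q * (\<Sum>s<t. u s) \<le> 2 * B0 * real t + c1p + (lam i j + dl) * real t"
    by (simp add: algebra_simps)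
  moreover have "c1p \<le> c1p * real t"
  proof -
    have "c1p * 1 \<le> c1p * real t" using t by (intro mult_left_mono) (auto simp: c1p_def)
    then show ?thesis by simp
  qed
  ultimately show ?thesis unfolding u_def by (simp add: algebra_simps)
qed

definition Bf :: "nat \<Rightarrow> nat \<Rightarrow> real" where "Bf i j = (2 * B0 + lam i j + dl + c1p) / q"

lemma B0_nonneg: "B0 \<ge> 0" unfolding B0_def c1p_def using q dl_pos by (simp add: add_nonneg_nonneg)

lemma cesaro_bound: assumes ij: "(i, j) \<in> pairs K" and V: "V > 0" and t: "t \<ge> 1"
  shows "1 / real t * (\<Sum>\<tau><t. measure M {\<omega> \<in> space M. real (U i j \<tau> \<omega>) > V}) \<le> Bf i j / V"
proof -
  note [measurable] = UM[OF ij]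
  have mk: "measure M {\<omega> \<in> space M. real (U i j \<tau> \<omega>) > V} \<le> (\<integral>\<omega>. real (U i j \<tau> \<omega>) \<partial>M) / V" for \<tau>
  proof -
    have "measure M {\<omega> \<in> space M. real (U i j \<tau> \<omega>) > V} \<le> measure M {\<omega> \<in> space M. real (U i j \<tau> \<omega>) \<ge> V}"
      by (rule P.finite_measure_mono) auto
    also have "\<dots> \<le> (\<integral>\<omega>. real (U i j \<tau> \<omega>) \<partial>M) / V"
      by (rule integral_Markov_inequality_measure[OF U_int[OF ij], where A="space M"]) (use V in auto)
    finally show ?thesis .
  qed
  have "(\<Sum>\<tau><t. measure M {\<omega> \<in> space M. real (U i j \<tau> \<omega>) > V}) \<le> (\<Sum>\<tau><t. (\<integral>\<omega>. real (U i j \<tau> \<omega>) \<partial>M) / V)"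
    by (intro sum_mono mk)
  also have "\<dots> = (\<Sum>\<tau><t. \<integral>\<omega>. real (U i j \<tau> \<omega>) \<partial>M) / V" by (simp add: sum_divide_distrib)
  also have "\<dots> \<le> ((2 * B0 + lam i j + dl + c1p) * real t / q) / V"
  proof (rule divide_right_mono)
    show "(\<Sum>\<tau><t. \<integral>\<omega>. real (U i j \<tau> \<omega>) \<partial>M) \<le> (2 * B0 + lam i j + dl + c1p) * real t / q"
      using T_bound[OF ij t] q by (simp add: field_simps)
  qed (use V in auto)
  finally have "(\<Sum>\<tau><t. measure M {\<omega> \<in> space M. real (U i j \<tau> \<omega>) > V}) \<le> ((2 * B0 + lam i j + dl + c1p) * real t / q) / V" .
  then have "1 / real t * (\<Sum>\<tau><t. measure M {\<omega> \<in> space M. real (U i j \<tau> \<omega>) > V}) \<le> 1 / real t * (((2 * B0 + lam i j + dl + c1p) * real t / q) / V)"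
    using t by (intro mult_left_mono) auto
  also have "\<dots> = Bf i j / V" using t V q unfolding Bf_def by (simp add: field_simps)
  finally show ?thesis .
qed

theorem stable_main: "stable M K U"
  unfolding stable_def
proof (intro ballI, clarify)
  fix i j assume ij: "(i, j) \<in> pairs K"
  define L where "L V = limsup (\<lambda>t. ereal (1 / real t * (\<Sum>\<tau> < t. measure M {\<omega> \<in> space M. real (U i j \<tau> \<omega>) > V})))" for V :: real
  have lo: "0 \<le> L V" for V
    unfolding L_def
    by (rule le_Limsup) (auto intro!: always_eventually divide_nonneg_nonneg sum_nonneg)
  have hi: "L V \<le> ereal (Bf i j / V)" if V: "V > 0" for V
    unfolding L_def
  proof (rule Limsup_bounded)
    show "\<forall>\<^sub>F t in sequentially. ereal (1 / real t * (\<Sum>\<tau><t. measure M {\<omega> \<in> space M. V < real (U i j \<tau> \<omega>)})) \<le> ereal (Bf i j / V)"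
      using eventually_ge_at_top[of "1::nat"] by eventually_elim (use cesaro_bound[OF ij V] in auto)
  qed
  have lim: "((\<lambda>V. ereal (Bf i j / V)) \<longlongrightarrow> ereal 0) at_top"
    by (intro tendsto_ereal tendsto_divide_0[OF tendsto_const] filterlim_at_top_imp_at_infinity filterlim_ident)
  show "((\<lambda>V. L V) \<longlongrightarrow> 0) at_top"
  proof (rule tendsto_sandwich[OF _ _ tendsto_const])
    show "\<forall>\<^sub>F V in at_top. 0 \<le> L V" using lo by simp
    show "\<forall>\<^sub>F V in at_top. L V \<le> ereal (Bf i j / V)"
      using eventually_gt_at_top[of "0::real"] by eventually_elim (rule hi)
    show "((\<lambda>V. ereal (Bf i j / V)) \<longlongrightarrow> 0) at_top" using lim by (simp add: zero_ereal_def)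
  qed
qed

end

theorem theorem6:
  fixes M :: "'a measure" and K :: nat
    and p :: "nat \<Rightarrow> real" and q :: "real" and lam :: "nat \<Rightarrow> nat \<Rightarrow> real"
    and eps :: real and Amax :: real
    and C :: "nat \<Rightarrow> nat \<Rightarrow> 'a \<Rightarrow> nat"
    and A :: "nat \<Rightarrow> nat \<Rightarrow> nat \<Rightarrow> 'a \<Rightarrow> nat"
    and S :: "nat \<Rightarrow> nat \<Rightarrow> nat \<Rightarrow> nat \<Rightarrow> 'a \<Rightarrow> nat"
    and F U E R :: "nat \<Rightarrow> nat \<Rightarrow> nat \<Rightarrow> 'a \<Rightarrow> nat"
    and E0 :: "nat \<Rightarrow> nat \<Rightarrow> 'a \<Rightarrow> nat"
  assumes M: "prob_space M"
    and q: "0 < q" "q \<le> 1"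
    \<comment> \<open>exogenous randomness: generations, arrival processes (per unordered pair), swap coins,
        all mutually independent\<close>
    and indep: "prob_space.indep_vars M (\<lambda>_. seqM) (sources C A S) (src_index K)"
    and C_bern: "\<And>i t. i \<in> {1..K} \<Longrightarrow> (\<forall>\<omega>\<in>space M. C i t \<omega> \<le> 1)
                   \<and> measure M {\<omega> \<in> space M. C i t \<omega> = 1} = p i"
    and S_sym: "\<And>i j t k. S i j t k = S j i t k"
    and S_bern: "\<And>i j t k. (i, j) \<in> pairs K \<Longrightarrow> (\<forall>\<omega>\<in>space M. S i j t k \<omega> \<le> 1)
                   \<and> measure M {\<omega> \<in> space M. S i j t k \<omega> = 1} = q"
    and A_sym: "\<And>i j t. A i j t = A j i t"
    and A_erg: "\<And>i j. (i, j) \<in> pairs K \<Longrightarrow> stationary_ergodic_rate M (A i j) (lam i j)"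
    and A_mom: "\<And>i j t. (i, j) \<in> pairs K \<Longrightarrow>
        AE \<omega> in M. nn_cond_exp M (history M K E U A R C t)
                       (\<lambda>\<omega>. ennreal ((real (A i j t \<omega>))\<^sup>2)) \<omega> \<le> ennreal (Amax\<^sup>2)"
    \<comment> \<open>capacity condition\<close>
    and eps: "eps > 0"
    and Lam: "in_Lambda K p q (\<lambda>i j. lam i j + eps)"
    \<comment> \<open>Assumption 1\<close>
    and assm1: "\<And>eps'. eps' > 0 \<Longrightarrow> \<exists>c1::real. \<forall>t \<ge> 1. \<forall>(i, j) \<in> pairs K.
        (\<integral>\<^sup>+ \<omega>. indicator {\<omega> \<in> space M. \<exists>(i', j') \<in> pairs K.
                 \<bar>(\<Sum>\<tau> < t. real (A i' j' \<tau> \<omega>)) / real t - lam i' j'\<bar> > eps'} \<omega>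
              * ennreal (\<Sum>\<tau> < t. real (A i j \<tau> \<omega>)) \<partial>M) \<le> ennreal c1"
    \<comment> \<open>dynamics\<close>
    and init: "\<And>i j \<omega>. U i j 0 \<omega> = 0 \<and> E i j 0 \<omega> = 0 \<and> E0 i 0 \<omega> = 0"
    and R_def: "\<And>i j t \<omega>. (i, j) \<in> pairs K \<Longrightarrow> R i j t \<omega> = (\<Sum>k < F i j t \<omega>. S i j t k \<omega>)"
    and U_step: "\<And>i j t \<omega>. (i, j) \<in> pairs K \<Longrightarrow>
        U i j (Suc t) \<omega> = (U i j t \<omega> - E i j t \<omega> - R i j t \<omega>) + A i j t \<omega>"
    and E_step: "\<And>i j t \<omega>. (i, j) \<in> pairs K \<Longrightarrow>
        E i j (Suc t) \<omega> = (E i j t \<omega> + R i j t \<omega>) - U i j t \<omega>"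
    and E0_step: "\<And>i t \<omega>. i \<in> {1..K} \<Longrightarrow>
        E0 i (Suc t) \<omega> = E0 i t \<omega> - (\<Sum>j \<in> {1..K} - {i}. F i j t \<omega>) + C i t \<omega>"
    \<comment> \<open>the protocol: non-anticipating and on-demand\<close>
    and F_meas: "\<And>i j t. (i, j) \<in> pairs K \<Longrightarrow>
        F i j t \<in> measurable (past M K A C S t) (count_space UNIV)"
    and F_sym: "\<And>i j t \<omega>. F i j t \<omega> = F j i t \<omega>"
    and od_cap: "\<And>j t \<omega>. j \<in> {1..K} \<Longrightarrow> (\<Sum>i \<in> {1..K} - {j}. F i j t \<omega>) \<le> E0 j t \<omega>"
    and od_dem: "\<And>i j t \<omega>. (i, j) \<in> pairs K \<Longrightarrow> F i j t \<omega> \<le> U i j t \<omega>"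
    and od_max: "\<And>i j t \<omega>. (i, j) \<in> pairs K \<Longrightarrow>
        (E0 i t \<omega> - (\<Sum>k \<in> {1..K} - {i}. F i k t \<omega>)) * (E0 j t \<omega> - (\<Sum>k \<in> {1..K} - {j}. F k j t \<omega>))
          * (U i j t \<omega> - F i j t \<omega>) = 0"
  shows "stable M K U"
proof -
  interpret qsw M K p q lam eps Amax C A S F U E R E0
    by (rule qsw.intro) (fact assms)+
  show ?thesis by (rule stable_main)
qed

end
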